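(* Let $G$ be a group, $\mathcal H$ a complex separable Hilbert space and $V\colon G\to\mathcal U(\mathcal H)$ a unitary representation which decomposes as a direct sum $V=V_1\oplus V_2$ on $\mathcal H=\mathcal H_1\oplus\mathcal H_2$ of two equivalent irreducible representations. Let $T\colon\mathcal D(T)\subset\mathcal H\to\mathcal H$ be a densely defined self-adjoint operator which is $G$-invariant with respect to $V$. Then $T$ is bounded.
   Context: $T$ is $G$-invariant if $V(g)\mathcal D(T)\subset\mathcal D(T)$ and $TV(g)\Psi=V(g)T\Psi$ for all $g\in G$, $\Psi\in\mathcal D(T)$. *)

theory Defs
  imports "HOL-Analysis.Analysis" "HOL-Algebra.Group"
begin

class chilbert = banach +
  fixes scaleC :: "complex \<Rightarrow> 'a \<Rightarrow> 'a"
    and cinner :: "'a \<Rightarrow> 'a \<Rightarrow> complex"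
  assumes scaleC_add_right: "scaleC a (x + y) = scaleC a x + scaleC a y"
    and scaleC_add_left: "scaleC (a + b) x = scaleC a x + scaleC b x"
    and scaleC_scaleC: "scaleC a (scaleC b x) = scaleC (a * b) x"
    and scaleC_one: "scaleC 1 x = x"
    and scaleR_scaleC: "scaleR r x = scaleC (complex_of_real r) x"
    and cinner_cnj_commute: "cinner x y = cnj (cinner y x)"
    and cinner_add_right: "cinner x (y + z) = cinner x y + cinner x z"
    and cinner_scaleC_right: "cinner x (scaleC a y) = a * cinner x y"
    and cinner_self_nonneg: "0 \<le> Re (cinner x x)"
    and cinner_self_eq_0: "cinner x x = 0 \<longleftrightarrow> x = 0"
    and norm_eq_sqrt_cinner: "norm x = sqrt (Re (cinner x x))"

definition csubspace :: "'a::chilbert set \<Rightarrow> bool" where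
  "csubspace S \<longleftrightarrow> 0 \<in> S \<and> (\<forall>x\<in>S. \<forall>y\<in>S. x + y \<in> S) \<and> (\<forall>c. \<forall>x\<in>S. scaleC c x \<in> S)"

definition closed_csubspace :: "'a::chilbert set \<Rightarrow> bool" where
  "closed_csubspace S \<longleftrightarrow> csubspace S \<and> closed S"

definition clinear_on :: "'a::chilbert set \<Rightarrow> ('a \<Rightarrow> 'b::chilbert) \<Rightarrow> bool" where
  "clinear_on S f \<longleftrightarrow> (\<forall>x\<in>S. \<forall>y\<in>S. f (x + y) = f x + f y) \<and> (\<forall>c. \<forall>x\<in>S. f (scaleC c x) = scaleC c (f x))"

definition unitary_op :: "('a::chilbert \<Rightarrow> 'a) \<Rightarrow> bool" where
  "unitary_op U \<longleftrightarrow> clinear_on UNIV U \<and> surj U \<and> (\<forall>x y. cinner (U x) (U y) = cinner x y)"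

definition unitary_rep :: "('g, 'c) monoid_scheme \<Rightarrow> ('g \<Rightarrow> 'a::chilbert \<Rightarrow> 'a) \<Rightarrow> bool" where
  "unitary_rep G V \<longleftrightarrow> group G \<and> (\<forall>g\<in>carrier G. unitary_op (V g))
     \<and> (\<forall>g\<in>carrier G. \<forall>h\<in>carrier G. V (g \<otimes>\<^bsub>G\<^esub> h) = V g \<circ> V h)
     \<and> V \<one>\<^bsub>G\<^esub> = id"

definition rep_invariant :: "('g, 'c) monoid_scheme \<Rightarrow> ('g \<Rightarrow> 'a::chilbert \<Rightarrow> 'a) \<Rightarrow> 'a set \<Rightarrow> bool" where
  "rep_invariant G V K \<longleftrightarrow> (\<forall>g\<in>carrier G. V g ` K \<subseteq> K)"

definition irreducible_subrep :: "('g, 'c) monoid_scheme \<Rightarrow> ('g \<Rightarrow> 'a::chilbert \<Rightarrow> 'a) \<Rightarrow> 'a set \<Rightarrow> bool" where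
  "irreducible_subrep G V K \<longleftrightarrow> closed_csubspace K \<and> rep_invariant G V K \<and> K \<noteq> {0}
     \<and> (\<forall>K'. closed_csubspace K' \<and> K' \<subseteq> K \<and> rep_invariant G V K' \<longrightarrow> K' = {0} \<or> K' = K)"

definition equivalent_subreps :: "('g, 'c) monoid_scheme \<Rightarrow> ('g \<Rightarrow> 'a::chilbert \<Rightarrow> 'a) \<Rightarrow> 'a set \<Rightarrow> 'a set \<Rightarrow> bool" where
  "equivalent_subreps G V K1 K2 \<longleftrightarrow> (\<exists>W. bij_betw W K1 K2 \<and> clinear_on K1 W
     \<and> (\<forall>x\<in>K1. \<forall>y\<in>K1. cinner (W x) (W y) = cinner x y)
     \<and> (\<forall>g\<in>carrier G. \<forall>x\<in>K1. W (V g x) = V g (W x)))"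

text \<open>\<open>H = H1 \<oplus> H2\<close> as an orthogonal direct sum of closed subspaces, each invariant
under \<open>V\<close>, so that \<open>V = V1 \<oplus> V2\<close>.\<close>
definition orth_decomposition :: "('g, 'c) monoid_scheme \<Rightarrow> ('g \<Rightarrow> 'a::chilbert \<Rightarrow> 'a) \<Rightarrow> 'a set \<Rightarrow> 'a set \<Rightarrow> bool" where
  "orth_decomposition G V H1 H2 \<longleftrightarrow> closed_csubspace H1 \<and> closed_csubspace H2
     \<and> (\<forall>x\<in>H1. \<forall>y\<in>H2. cinner x y = 0)
     \<and> {x + y | x y. x \<in> H1 \<and> y \<in> H2} = UNIV
     \<and> rep_invariant G V H1 \<and> rep_invariant G V H2"

text \<open>A densely defined (linear) operator \<open>T\<close> with domain \<open>D\<close>; the values of \<open>T\<close>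
outside \<open>D\<close> are irrelevant.\<close>
definition densely_defined :: "'a::chilbert set \<Rightarrow> ('a \<Rightarrow> 'a) \<Rightarrow> bool" where
  "densely_defined D T \<longleftrightarrow> csubspace D \<and> clinear_on D T \<and> closure D = UNIV"

definition adjoint_domain :: "'a::chilbert set \<Rightarrow> ('a \<Rightarrow> 'a) \<Rightarrow> 'a set" where
  "adjoint_domain D T = {y. \<exists>z. \<forall>x\<in>D. cinner (T x) y = cinner x z}"

text \<open>Self-adjointness \<open>T = T*\<close>: equal domains and \<open>T* y = T y\<close> on the domain
(for densely defined \<open>T\<close>, \<open>T* y\<close> is the unique \<open>z\<close> with \<open>\<langle>T x, y\<rangle> = \<langle>x, z\<rangle>\<close>).\<close>
definition self_adjoint :: "'a::chilbert set \<Rightarrow> ('a \<Rightarrow> 'a) \<Rightarrow> bool" where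
  "self_adjoint D T \<longleftrightarrow> adjoint_domain D T = D \<and> (\<forall>x\<in>D. \<forall>y\<in>D. cinner (T x) y = cinner x (T y))"

definition G_invariant :: "('g, 'c) monoid_scheme \<Rightarrow> ('g \<Rightarrow> 'a::chilbert \<Rightarrow> 'a) \<Rightarrow> 'a set \<Rightarrow> ('a \<Rightarrow> 'a) \<Rightarrow> bool" where
  "G_invariant G V D T \<longleftrightarrow> (\<forall>g\<in>carrier G. V g ` D \<subseteq> D \<and> (\<forall>\<Psi>\<in>D. T (V g \<Psi>) = V g (T \<Psi>)))"

definition bounded_op :: "'a::chilbert set \<Rightarrow> ('a \<Rightarrow> 'a) \<Rightarrow> bool" where
  "bounded_op D T \<longleftrightarrow> (\<exists>C. \<forall>x\<in>D. norm (T x) \<le> C * norm x)"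

end

theory Submission
  imports Defs "HOL-Computational_Algebra.Formal_Power_Series"
begin


lemma cinner_add_left: "cinner (x + y) z = cinner x z + cinner (y::'a::chilbert) z"
proof -
  have "cinner (x+y) z = cnj (cinner z (x+y))" by (rule cinner_cnj_commute)
  also have "\<dots> = cnj (cinner z x) + cnj (cinner z y)" by (simp add: cinner_add_right)
  also have "\<dots> = cinner x z + cinner y z" using cinner_cnj_commute[of x z] cinner_cnj_commute[of y z] by simp
  finally show ?thesis .
qed

lemma cinner_scaleC_left: "cinner (scaleC a x) (y::'a::chilbert) = cnj a * cinner x y"
proof -
  have "cinner (scaleC a x) y = cnj (cinner y (scaleC a x))" by (rule cinner_cnj_commute)
  also have "\<dots> = cnj a * cnj (cinner y x)" by (simp add: cinner_scaleC_right)
  also have "\<dots> = cnj a * cinner x y" using cinner_cnj_commute[of x y] by simp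
  finally show ?thesis .
qed

lemma scaleC_zero_right[simp]: "scaleC a (0::'a::chilbert) = 0"
  using scaleC_add_right[of a 0 0] by simp

lemma scaleC_zero_left[simp]: "scaleC 0 (x::'a::chilbert) = 0"
  using scaleC_add_left[of 0 0 x] by simp

lemma scaleC_minus1: "scaleC (-1) (x::'a::chilbert) = - x"
  using scaleR_scaleC[of "-1" x] by simp

lemma scaleC_real: "scaleC (complex_of_real r) (x::'a::chilbert) = scaleR r x"
  by (simp add: scaleR_scaleC)

lemma cinner_zero_left[simp]: "cinner 0 (y::'a::chilbert) = 0"
  using cinner_add_left[of 0 0 y] by simp

lemma cinner_zero_right[simp]: "cinner y (0::'a::chilbert) = 0"
  using cinner_add_right[of y 0 0] by simp

lemma cinner_minus_left: "cinner (- x) (y::'a::chilbert) = - cinner x y"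
proof -
  have "cinner x y + cinner (-x) y = 0" using cinner_add_left[of x "-x" y] by simp
  thus ?thesis by (simp add: add_eq_0_iff)
qed

lemma cinner_minus_right: "cinner y (- x) = - cinner (y::'a::chilbert) x"
proof -
  have "cinner y x + cinner y (-x) = 0" using cinner_add_right[of y x "-x"] by simp
  thus ?thesis by (simp add: add_eq_0_iff)
qed

lemma cinner_diff_left: "cinner (x - y) (z::'a::chilbert) = cinner x z - cinner y z"
  by (simp only: diff_conv_add_uminus cinner_add_left cinner_minus_left)

lemma cinner_diff_right: "cinner z (x - y) = cinner (z::'a::chilbert) x - cinner z y"
  by (simp only: diff_conv_add_uminus cinner_add_right cinner_minus_right)

lemma cinner_scaleR_left: "cinner (scaleR r x) (y::'a::chilbert) = of_real r * cinner x y"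
  by (simp add: scaleR_scaleC cinner_scaleC_left)

lemma cinner_scaleR_right: "cinner y (scaleR r x) = of_real r * cinner (y::'a::chilbert) x"
  by (simp add: scaleR_scaleC cinner_scaleC_right)

lemma cinner_self_real: "cinner x (x::'a::chilbert) = of_real ((norm x)^2)"
proof -
  have e: "cinner x x = cnj (cinner x x)" by (rule cinner_cnj_commute)
  have "Im (cinner x x) = 0" using arg_cong[OF e, of Im] by simp
  moreover have "Re (cinner x x) = (norm x)^2"
    using norm_eq_sqrt_cinner[of x] cinner_self_nonneg[of x] by simp
  ultimately show ?thesis by (simp add: complex_eq_iff)
qed

lemma Re_cinner_self: "Re (cinner x (x::'a::chilbert)) = (norm x)^2"
  by (simp add: cinner_self_real)

lemma scaleC_scaleC': "scaleC a (scaleC b x) = scaleC (a*b) (x::'a::chilbert)"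
  by (rule scaleC_scaleC)

lemma scaleC_diff_right: "scaleC a (x - y) = scaleC a x - scaleC a (y::'a::chilbert)"
  using scaleC_add_right[of a "x - y" y] by (simp add: eq_diff_eq)

lemma scaleC_minus_right: "scaleC a (- y) = - scaleC a (y::'a::chilbert)"
  using scaleC_diff_right[of a 0 y] by simp

lemma scaleC_diff_left: "scaleC (a - b) x = scaleC a x - scaleC b (x::'a::chilbert)"
  using scaleC_add_left[of "a - b" b x] by (simp add: eq_diff_eq)

lemma scaleC_minus_left: "scaleC (- a) x = - scaleC a (x::'a::chilbert)"
  using scaleC_diff_left[of 0 a x] by simp

lemma norm_scaleC: "norm (scaleC a x) = cmod a * norm (x::'a::chilbert)"
proof -
  have "(norm (scaleC a x))^2 = Re (cinner (scaleC a x) (scaleC a x))" by (simp add: Re_cinner_self)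
  also have "\<dots> = Re (cnj a * a * cinner x x)" by (simp only: cinner_scaleC_left cinner_scaleC_right mult.assoc mult.left_commute)
  also have "cnj a * a = of_real ((cmod a)^2)" using complex_norm_square[of a] by (simp add: mult.commute)
  hence "Re (cnj a * a * cinner x x) = (cmod a)^2 * (norm x)^2"
    by (simp add: cinner_self_real del: of_real_power)
  also have "\<dots> = (cmod a * norm x)^2" by (simp add: power_mult_distrib)
  finally show ?thesis by (simp add: power2_eq_iff_nonneg)
qed

lemma cinner_eq_zero_iff[simp]: "cinner x x = 0 \<longleftrightarrow> (x::'a::chilbert) = 0"
  by (rule cinner_self_eq_0)

lemma cauchy_schwarz: "cmod (cinner x y) \<le> norm x * norm (y::'a::chilbert)"
proof -
  show ?thesis
  proof (cases "y = 0")
    case True thus ?thesis by simp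
  next
    case False
    hence ny: "norm y > 0" by simp
    define c where "c = cinner y x / of_real ((norm y)^2)"
    define w where "w = x - scaleC c y"
    have yy: "cinner y y = of_real ((norm y)^2)" by (rule cinner_self_real)
    have yw: "cinner y w = 0" using ny unfolding w_def c_def
      by (simp add: cinner_diff_right cinner_scaleC_right yy)
    have wy: "cinner w y = 0" using yw cinner_cnj_commute[of w y] by simp
    have xe: "x = w + scaleC c y" by (simp add: w_def)
    have "cinner x x = cinner w w + cnj c * c * cinner y y"
      unfolding xe by (simp add: cinner_add_left cinner_add_right cinner_scaleC_left cinner_scaleC_right yw wy mult.assoc)
    hence "(norm x)^2 = (norm w)^2 + (cmod c)^2 * (norm y)^2"
      using Re_cinner_self[of x]
      by (simp add: cinner_self_real complex_norm_square[symmetric] mult.commute)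
    hence "(cmod c)^2 * (norm y)^2 \<le> (norm x)^2" using zero_le_power2[of "norm w"] by linarith
    moreover have "cmod c = cmod (cinner y x) / (norm y)^2" unfolding c_def
      by (simp add: norm_divide norm_power)
    moreover have "cmod (cinner y x) = cmod (cinner x y)"
      using cinner_cnj_commute[of y x] by simp
    ultimately have "(cmod (cinner x y))^2 / (norm y)^2 \<le> (norm x)^2"
      using ny by (simp add: power_divide field_simps power2_eq_square)
    hence "(cmod (cinner x y))^2 \<le> (norm x)^2 * (norm y)^2" using ny by (simp add: field_simps)
    hence "(cmod (cinner x y))^2 \<le> (norm x * norm y)^2" by (simp add: power_mult_distrib)
    thus ?thesis by (simp add: power2_le_iff_abs_le)
  qed
qed

lemma bounded_linear_cinner_right: "bounded_linear (\<lambda>y. cinner (x::'a::chilbert) y)"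
  apply (rule bounded_linear_intro[where K="norm x"])
    apply (simp add: cinner_add_right)
   apply (simp add: cinner_scaleR_right scaleR_conv_of_real)
  by (subst mult.commute) (rule cauchy_schwarz)

lemma bounded_linear_cinner_left: "bounded_linear (\<lambda>x. cinner x (y::'a::chilbert))"
  apply (rule bounded_linear_intro[where K="norm y"])
    apply (simp add: cinner_add_left)
   apply (simp add: cinner_scaleR_left scaleR_conv_of_real)
  by (simp add: cauchy_schwarz)

lemma pythagoras: "cinner x y = 0 \<Longrightarrow> (norm (x + y))^2 = (norm x)^2 + (norm (y::'a::chilbert))^2"
proof -
  assume xy: "cinner x y = 0"
  hence yx: "cinner y x = 0" using cinner_cnj_commute[of y x] by simp
  have "cinner (x+y) (x+y) = cinner x x + cinner y y"
    by (simp add: cinner_add_left cinner_add_right xy yx)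
  hence "Re (cinner (x+y) (x+y)) = Re (cinner x x) + Re (cinner y y)" by simp
  thus ?thesis by (simp add: Re_cinner_self)
qed

lemma cinner_continuous_right:
  "(f \<longlongrightarrow> l) F \<Longrightarrow> ((\<lambda>n. cinner x (f n)) \<longlongrightarrow> cinner (x::'a::chilbert) l) F"
  using bounded_linear.tendsto[OF bounded_linear_cinner_right] by blast

lemma cinner_continuous_left:
  "(f \<longlongrightarrow> l) F \<Longrightarrow> ((\<lambda>n. cinner (f n) y) \<longlongrightarrow> cinner l (y::'a::chilbert)) F"
  using bounded_linear.tendsto[OF bounded_linear_cinner_left] by blast

lemma orth_dense_zero:
  assumes "closure D = UNIV" "\<And>d. d \<in> D \<Longrightarrow> cinner d (x::'a::chilbert) = 0"
  shows "x = 0"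
proof -
  have "closed {d. cinner d x = 0}"
    using continuous_closed_preimage_constant[OF
        linear_continuous_on[OF bounded_linear_cinner_left, of UNIV x]] by simp
  hence "closure D \<subseteq> {d. cinner d x = 0}" using assms(2) by (intro closure_minimal) auto
  moreover have "x \<in> closure D" using assms(1) by simp
  ultimately have "cinner x x = 0" by blast
  thus ?thesis by simp
qed

definition bop :: "('a::chilbert \<Rightarrow> 'a) \<Rightarrow> bool" where
  "bop A \<longleftrightarrow> bounded_linear A \<and> (\<forall>c x. A (scaleC c x) = scaleC c (A x))"

definition sadj :: "('a::chilbert \<Rightarrow> 'a) \<Rightarrow> bool" where
  "sadj A \<longleftrightarrow> (\<forall>x y. cinner (A x) y = cinner x (A y))"

lemma bopI:
  assumes "\<And>x y. A (x + y) = A x + A y" "\<And>c x. A (scaleC c x) = scaleC c (A x)"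
    "\<And>x. norm (A x) \<le> norm x * K"
  shows "bop (A::'a::chilbert \<Rightarrow> 'a)"
  unfolding bop_def using assms
  by (auto intro!: bounded_linear_intro[where K=K] simp: scaleR_scaleC)

lemma bop_add: "bop A \<Longrightarrow> A (x + y) = A x + A y"
  unfolding bop_def by (simp add: linear_simps)
lemma bop_diff: "bop A \<Longrightarrow> A (x - y) = A x - A y"
  unfolding bop_def by (simp add: linear_simps)
lemma bop_minus: "bop A \<Longrightarrow> A (- y) = - A y"
  unfolding bop_def by (simp add: linear_simps)
lemma bop_zero: "bop A \<Longrightarrow> A 0 = 0"
  unfolding bop_def by (simp add: linear_simps)
lemma bop_scaleC: "bop A \<Longrightarrow> A (scaleC c x) = scaleC c (A x)"
  unfolding bop_def by simp
lemma bop_scaleR: "bop A \<Longrightarrow> A (scaleR c x) = scaleR c (A x)"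
  unfolding bop_def by (simp add: linear_simps)
lemma bop_bl: "bop A \<Longrightarrow> bounded_linear A"
  unfolding bop_def by simp
lemma bop_bound: "bop A \<Longrightarrow> \<exists>K>0. \<forall>x. norm (A x) \<le> norm x * K"
  unfolding bop_def using bounded_linear.pos_bounded by blast

lemma bop_comp: "bop A \<Longrightarrow> bop B \<Longrightarrow> bop (A \<circ> B)"
  unfolding bop_def o_def by (auto intro: bounded_linear_compose)
lemma bop_id: "bop id"
  unfolding bop_def by (simp add: bounded_linear_ident[unfolded id_def[symmetric]])
lemma bop_plus: "bop A \<Longrightarrow> bop B \<Longrightarrow> bop (\<lambda>x. A x + B x)"
  unfolding bop_def by (auto intro: bounded_linear_add simp: scaleC_add_right)
lemma bop_minus_op: "bop A \<Longrightarrow> bop B \<Longrightarrow> bop (\<lambda>x. A x - B x)"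
  unfolding bop_def by (auto intro: bounded_linear_sub simp: scaleC_diff_right)
lemma bop_scaleC_op: "bop A \<Longrightarrow> bop (\<lambda>x. scaleC c (A x))"
proof -
  assume a: "bop A"
  have "bounded_linear (\<lambda>x. scaleC c x :: 'a)"
    by (rule bounded_linear_intro[where K="cmod c"])
       (auto simp: scaleC_add_right norm_scaleC scaleR_scaleC scaleC_scaleC mult.commute)
  thus ?thesis using a unfolding bop_def
    by (auto intro: bounded_linear_compose[where f="\<lambda>x. scaleC c x"] simp: scaleC_scaleC mult.commute)
qed
lemma bop_scaleR_op: "bop A \<Longrightarrow> bop (\<lambda>x. scaleR r (A x))"
  using bop_scaleC_op[of A "of_real r"] by (simp add: scaleR_scaleC)

lemma bop_funpow: "bop A \<Longrightarrow> bop (A ^^ n)"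
  by (induction n) (auto simp: bop_id bop_comp)

lemma bounded_linear_scaleC: "bounded_linear (\<lambda>x. scaleC c (x::'a::chilbert))"
  by (rule bounded_linear_intro[where K="cmod c"])
     (auto simp: scaleC_add_right norm_scaleC scaleR_scaleC scaleC_scaleC mult.commute)



definition bcoef :: "nat \<Rightarrow> real" where "bcoef k = (-1)^k * ((1/2) gchoose k)"

lemma gch_Suc: "(a::real) gchoose Suc k = (a gchoose k) * (a - real k) / (1 + real k)"
proof -
  have "fact (Suc k) * (a gchoose Suc k) = (\<Prod>i = 0..<Suc k. a - of_nat i)" by (rule gbinomial_mult_fact)
  also have "\<dots> = (\<Prod>i = 0..<k. a - of_nat i) * (a - real k)" by simp
  also have "\<dots> = fact k * (a gchoose k) * (a - real k)" by (simp add: gbinomial_mult_fact)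
  finally have e: "fact (Suc k) * (a gchoose Suc k) = fact k * (a gchoose k) * (a - real k)" .
  have "fact (Suc k) = (1 + real k) * (fact k :: real)" by (simp add: algebra_simps)
  with e have "fact k * ((1 + real k) * (a gchoose Suc k)) = fact k * ((a gchoose k) * (a - real k))"
    by (simp add: mult_ac)
  hence h: "(1 + real k) * (a gchoose Suc k) = (a gchoose k) * (a - real k)" by simp
  have "a gchoose Suc k = ((1 + real k) * (a gchoose Suc k)) / (1 + real k)" by simp
  also have "\<dots> = (a gchoose k) * (a - real k) / (1 + real k)" by (simp only: h)
  finally show ?thesis .
qed

lemma bcoef_0[simp]: "bcoef 0 = 1" by (simp add: bcoef_def)

lemma bcoef_Suc: "bcoef (Suc k) = bcoef k * ((real k - 1/2) / (real k + 1))"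
  unfolding bcoef_def gch_Suc by (simp add: field_simps)

lemma bcoef_nonpos: "k \<ge> 1 \<Longrightarrow> bcoef k \<le> 0"
proof (induction k)
  case 0 thus ?case by simp
next
  case (Suc k)
  show ?case
  proof (cases "k = 0")
    case True thus ?thesis by (simp add: bcoef_Suc)
  next
    case False
    hence "bcoef k \<le> 0" using Suc by simp
    moreover have "(real k - 1/2) / (real k + 1) \<ge> 0" using False by simp
    ultimately have "bcoef k * ((real k - 1/2) / (real k + 1)) \<le> 0" by (rule mult_nonpos_nonneg)
    thus ?thesis by (simp only: bcoef_Suc)
  qed
qed

lemma abs_bcoef: "\<bar>bcoef k\<bar> = (if k = 0 then 1 else - bcoef k)"
  using bcoef_nonpos[of k] by auto

lemma bcoef_sums: "0 \<le> t \<Longrightarrow> t < 1 \<Longrightarrow> (\<lambda>n. bcoef n * t^n) sums sqrt (1 - t)"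
proof -
  assume t: "0 \<le> t" "t < 1"
  have "\<bar>-t\<bar> < 1" using t by simp
  from sqrt_series[OF this] have "(\<lambda>n. ((1/2) gchoose n) * (-t)^n) sums sqrt (1 + - t)" .
  moreover have "((1/2) gchoose n) * (-t)^n = bcoef n * t^n" for n
    unfolding bcoef_def power_minus[of t n] by (simp only: mult_ac)
  ultimately show ?thesis by (simp only: diff_conv_add_uminus)
qed

lemma abs_plus_bcoef_sum: "(\<Sum>n<Suc N. (\<bar>bcoef n\<bar> + bcoef n) * t^n) = 2"
proof -
  have "(\<Sum>n<Suc N. (\<bar>bcoef n\<bar> + bcoef n) * t^n) = (\<bar>bcoef 0\<bar> + bcoef 0) * t^0 + (\<Sum>n<N. (\<bar>bcoef (Suc n)\<bar> + bcoef (Suc n)) * t^(Suc n))"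
    by (rule sum.lessThan_Suc_shift)
  also have "\<dots> = 2" by (simp add: abs_bcoef)
  finally show ?thesis .
qed

lemma bcoef_partial_t: "0 \<le> t \<Longrightarrow> t < 1 \<Longrightarrow> (\<Sum>n<N. \<bar>bcoef n\<bar> * t^n) \<le> 2"
proof -
  assume t: "0 \<le> t" "t < 1"
  show ?thesis
  proof (cases N)
    case 0 thus ?thesis by simp
  next
    case (Suc M)
    let ?s = "\<lambda>N. (\<Sum>n<N. bcoef n * t^n)"
    have mono: "?s K \<le> ?s (Suc M)" if "K \<ge> Suc M" for K
    proof -
      have "?s K = ?s (Suc M) + (\<Sum>n\<in>{Suc M..<K}. bcoef n * t^n)"
        using sum.atLeastLessThan_concat[of 0 "Suc M" K "\<lambda>n. bcoef n * t^n"] that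
        by (simp add: atLeast0LessThan)
      moreover have "(\<Sum>n\<in>{Suc M..<K}. bcoef n * t^n) \<le> 0"
        by (rule sum_nonpos) (auto intro!: mult_nonpos_nonneg bcoef_nonpos simp: t)
      ultimately show ?thesis by simp
    qed
    have lim: "?s \<longlonglongrightarrow> sqrt (1 - t)" using bcoef_sums[OF t] by (simp add: sums_def)
    have "sqrt (1 - t) \<le> ?s (Suc M)"
      by (rule LIMSEQ_le_const2[OF lim]) (use mono in auto)
    hence "?s (Suc M) \<ge> 0" using real_sqrt_ge_zero[of "1-t"] t by linarith
    moreover have "(\<Sum>n<Suc M. \<bar>bcoef n\<bar> * t^n) + ?s (Suc M) = 2"
      using abs_plus_bcoef_sum[where N=M and t=t] by (simp add: sum.distrib algebra_simps)
    ultimately show ?thesis using Suc by simp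
  qed
qed

lemma bcoef_partial: "(\<Sum>n<N. \<bar>bcoef n\<bar>) \<le> 2"
proof -
  define t where "t m = 1 - inverse (real (Suc m))" for m
  have t0: "0 \<le> t m" "t m < 1" for m unfolding t_def by (simp_all add: field_simps)
  have "t \<longlonglongrightarrow> 1 - 0" unfolding t_def
    by (intro tendsto_diff tendsto_const LIMSEQ_inverse_real_of_nat)
  hence "t \<longlonglongrightarrow> 1" by simp
  hence "(\<lambda>m. \<Sum>n<N. \<bar>bcoef n\<bar> * (t m)^n) \<longlonglongrightarrow> (\<Sum>n<N. \<bar>bcoef n\<bar> * 1^n)"
    by (intro tendsto_sum tendsto_mult tendsto_const tendsto_power)
  hence "(\<Sum>n<N. \<bar>bcoef n\<bar> * 1^n) \<le> 2"
    by (rule LIMSEQ_le_const2) (use bcoef_partial_t t0 in auto)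
  thus ?thesis by simp
qed

lemma summable_abs_bcoef: "summable (\<lambda>n. \<bar>bcoef n\<bar>)"
proof (rule bounded_imp_summable[where B=2])
  fix n show "(\<Sum>k\<le>n. \<bar>bcoef k\<bar>) \<le> 2" using bcoef_partial[of "Suc n"] by (simp only: lessThan_Suc_atMost)
qed simp

lemma suminf_abs_bcoef: "(\<Sum>n. \<bar>bcoef n\<bar>) \<le> 2"
  by (rule suminf_le_const[OF summable_abs_bcoef bcoef_partial])

lemma bcoef_conv: "(\<Sum>i\<le>n. bcoef i * bcoef (n - i)) = (if n = 0 then 1 else if n = 1 then -1 else 0)"
proof -
  have "(\<Sum>i\<le>n. bcoef i * bcoef (n - i)) = (-1)^n * (\<Sum>i\<in>{0..n}. ((1/2) gchoose i) * ((1/2) gchoose (n - i)))"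
    unfolding sum_distrib_left atMost_atLeast0
    by (rule sum.cong) (auto simp: bcoef_def power_add[symmetric])
  also have "\<dots> = (-1)^n * ((1/2 + 1/2) gchoose n)" by (simp only: gbinomial_Vandermonde)
  also have "\<dots> = (-1)^n * of_nat (1 choose n)"
    using binomial_gbinomial[of 1 n, where 'a=real] by simp
  also have "\<dots> = (if n = 0 then 1 else if n = 1 then -1 else 0)"
    by (cases n) (auto simp: binomial_eq_0)
  finally show ?thesis .
qed


section \<open>Power-series square root of I - C for a contraction C\<close>

definition sq :: "('a::chilbert \<Rightarrow> 'a) \<Rightarrow> 'a \<Rightarrow> 'a" where
  "sq C x = (\<Sum>k. bcoef k *\<^sub>R (C ^^ k) x)"

definition psq :: "('a::chilbert \<Rightarrow> 'a) \<Rightarrow> nat \<Rightarrow> 'a \<Rightarrow> 'a" where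
  "psq C N x = (\<Sum>k<N. bcoef k *\<^sub>R (C ^^ k) x)"

lemma funpow_contr:
  fixes C :: "'a::chilbert \<Rightarrow> 'a"
  assumes "\<And>x. norm (C x) \<le> norm x" shows "norm ((C ^^ k) x) \<le> norm x"
proof (induction k)
  case 0 show ?case by simp
next
  case (Suc k)
  have "norm ((C ^^ Suc k) x) = norm (C ((C ^^ k) x))" by simp
  also have "\<dots> \<le> norm ((C ^^ k) x)" by (rule assms)
  finally show ?case using Suc by linarith
qed

lemma sq_summable_norm:
  fixes C :: "'a::chilbert \<Rightarrow> 'a"
  assumes "\<And>x. norm (C x) \<le> norm x"
  shows "summable (\<lambda>k. norm (bcoef k *\<^sub>R (C ^^ k) x))"
proof (rule summable_comparison_test'[where N=0])
  show "summable (\<lambda>k. \<bar>bcoef k\<bar> * norm x)" by (rule summable_mult2[OF summable_abs_bcoef])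
  fix k show "norm (norm (bcoef k *\<^sub>R (C ^^ k) x)) \<le> \<bar>bcoef k\<bar> * norm x"
    using funpow_contr[OF assms, of k x] by (simp add: mult_left_mono)
qed

lemma sq_summable:
  fixes C :: "'a::chilbert \<Rightarrow> 'a"
  assumes "\<And>x. norm (C x) \<le> norm x"
  shows "summable (\<lambda>k. bcoef k *\<^sub>R (C ^^ k) x)"
  by (rule summable_norm_cancel) (rule sq_summable_norm[OF assms])

lemma sq_norm:
  fixes C :: "'a::chilbert \<Rightarrow> 'a"
  assumes "\<And>x. norm (C x) \<le> norm x"
  shows "norm (sq C x) \<le> norm x * 2"
proof -
  have "norm (sq C x) \<le> (\<Sum>k. norm (bcoef k *\<^sub>R (C ^^ k) x))"
    unfolding sq_def by (rule summable_norm[OF sq_summable_norm[OF assms]])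
  also have "\<dots> \<le> (\<Sum>k. \<bar>bcoef k\<bar> * norm x)"
    by (rule suminf_le) (use funpow_contr[OF assms] sq_summable_norm[OF assms]
         summable_mult2[OF summable_abs_bcoef] in \<open>auto simp: mult_left_mono\<close>)
  also have "\<dots> = (\<Sum>k. \<bar>bcoef k\<bar>) * norm x" by (rule suminf_mult2[OF summable_abs_bcoef, symmetric])
  also have "\<dots> \<le> 2 * norm x" by (rule mult_right_mono[OF suminf_abs_bcoef]) simp
  finally show ?thesis by (simp add: mult.commute)
qed

lemma scaleC_scaleR_comm: "scaleC c (scaleR r (y::'a::chilbert)) = scaleR r (scaleC c y)"
  by (simp add: scaleR_scaleC scaleC_scaleC mult.commute)

lemma bop_sq:
  fixes C :: "'a::chilbert \<Rightarrow> 'a"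
  assumes C: "bop C" and contr: "\<And>x. norm (C x) \<le> norm x"
  shows "bop (sq C)"
proof (rule bopI[where K=2])
  have Ck: "bop (C ^^ k)" for k by (rule bop_funpow[OF C])
  fix x y :: 'a
  show "sq C (x + y) = sq C x + sq C y"
    unfolding sq_def
    by (simp add: suminf_add[OF sq_summable[OF contr] sq_summable[OF contr]] bop_add[OF Ck] scaleR_add_right)
  fix c
  have "scaleC c (sq C x) = (\<Sum>k. scaleC c (bcoef k *\<^sub>R (C ^^ k) x))"
    unfolding sq_def by (rule bounded_linear.suminf[OF bounded_linear_scaleC sq_summable[OF contr]])
  also have "\<dots> = sq C (scaleC c x)"
    unfolding sq_def by (simp add: bop_scaleC[OF Ck] scaleC_scaleR_comm)
  finally show "sq C (scaleC c x) = scaleC c (sq C x)" by simp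
  show "norm (sq C x) \<le> norm x * 2" by (rule sq_norm[OF contr])
qed

lemma funpow_comm:
  fixes C :: "'a::chilbert \<Rightarrow> 'a"
  assumes "\<And>x. B (C x) = C (B x)" shows "B ((C ^^ k) x) = (C ^^ k) (B x)"
  by (induction k) (auto simp: assms)

lemma sq_comm:
  fixes C :: "'a::chilbert \<Rightarrow> 'a"
  assumes B: "bop B" and contr: "\<And>x. norm (C x) \<le> norm x" and comm: "\<And>x. B (C x) = C (B x)"
  shows "B (sq C x) = sq C (B x)"
proof -
  have "B (sq C x) = (\<Sum>k. B (bcoef k *\<^sub>R (C ^^ k) x))"
    unfolding sq_def by (rule bounded_linear.suminf[OF bop_bl[OF B] sq_summable[OF contr]])
  also have "\<dots> = sq C (B x)"
    unfolding sq_def by (simp add: bop_scaleR[OF B] funpow_comm[where B=B and C=C, OF comm])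
  finally show ?thesis .
qed

lemma sadj_funpow: "sadj C \<Longrightarrow> sadj (C ^^ k)" for C :: "'a::chilbert \<Rightarrow> 'a"
  unfolding sadj_def
proof (induction k)
  case 0 show ?case by simp
next
  case (Suc k)
  show ?case
  proof (intro allI)
    fix x y
    have "cinner ((C ^^ Suc k) x) y = cinner (C ((C ^^ k) x)) y" by simp
    also have "\<dots> = cinner ((C ^^ k) x) (C y)" using Suc.prems by simp
    also have "\<dots> = cinner x ((C ^^ k) (C y))" using Suc.IH[OF Suc.prems] by simp
    also have "\<dots> = cinner x ((C ^^ Suc k) y)" by (simp add: funpow_swap1)
    finally show "cinner ((C ^^ Suc k) x) y = cinner x ((C ^^ Suc k) y)" .
  qed
qed

lemma sq_sadj:
  assumes sa: "sadj C" and contr: "\<And>x. norm (C x) \<le> norm x"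
  shows "sadj (sq C)"
  unfolding sadj_def
proof (intro allI)
  fix x y
  have "cinner (sq C x) y = (\<Sum>k. cinner (bcoef k *\<^sub>R (C ^^ k) x) y)"
    unfolding sq_def by (rule bounded_linear.suminf[OF bounded_linear_cinner_left sq_summable[OF contr]])
  also have "\<dots> = (\<Sum>k. cinner x (bcoef k *\<^sub>R (C ^^ k) y))"
    using sadj_funpow[OF sa] unfolding sadj_def by (simp add: cinner_scaleR_left cinner_scaleR_right)
  also have "\<dots> = cinner x (sq C y)"
    unfolding sq_def by (rule bounded_linear.suminf[OF bounded_linear_cinner_right sq_summable[OF contr], symmetric])
  finally show "cinner (sq C x) y = cinner x (sq C y)" .
qed

lemma csubspace_sum: "csubspace K \<Longrightarrow> (\<And>i. i \<in> A \<Longrightarrow> f i \<in> K) \<Longrightarrow> sum f A \<in> K"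
  unfolding csubspace_def by (induction A rule: infinite_finite_induct) auto

lemma csubspace_scaleR: "csubspace K \<Longrightarrow> x \<in> K \<Longrightarrow> scaleR r x \<in> K"
  unfolding csubspace_def by (simp add: scaleR_scaleC)

lemma funpow_inv: "C ` K \<subseteq> K \<Longrightarrow> x \<in> K \<Longrightarrow> (C ^^ k) x \<in> K" for C :: "'a \<Rightarrow> 'a"
  by (induction k) auto

lemma sq_subspace:
  fixes C :: "'a::chilbert \<Rightarrow> 'a"
  assumes K: "closed_csubspace K" and inv: "C ` K \<subseteq> K" and x: "x \<in> K"
    and contr: "\<And>x. norm (C x) \<le> norm x"
  shows "sq C x \<in> K"
proof -
  have cs: "csubspace K" "closed K" using K unfolding closed_csubspace_def by auto
  have "(\<lambda>n. \<Sum>k<n. bcoef k *\<^sub>R (C ^^ k) x) \<longlonglongrightarrow> sq C x"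
    unfolding sq_def by (rule summable_LIMSEQ[OF sq_summable[OF contr]])
  moreover have "(\<Sum>k<n. bcoef k *\<^sub>R (C ^^ k) x) \<in> K" for n
    by (intro csubspace_sum[OF cs(1)] csubspace_scaleR[OF cs(1)] funpow_inv[OF inv x])
  ultimately show ?thesis
    by (intro Lim_in_closed_set[OF cs(2)]) auto
qed

lemma Re_cinner_bound: "\<bar>Re (cinner x (y::'a::chilbert))\<bar> \<le> norm x * norm y"
  using abs_Re_le_cmod[of "cinner x y"] cauchy_schwarz[of x y] by linarith

lemma sq_pos:
  fixes C :: "'a::chilbert \<Rightarrow> 'a"
  assumes contr: "\<And>x. norm (C x) \<le> norm x"
  shows "0 \<le> Re (cinner (sq C x) x)"
proof -
  have bl: "bounded_linear (\<lambda>y. Re (cinner y x))"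
    by (rule bounded_linear_compose[OF bounded_linear_Re bounded_linear_cinner_left])
  have "Re (cinner (sq C x) x) = (\<Sum>k. Re (cinner (bcoef k *\<^sub>R (C ^^ k) x) x))"
    unfolding sq_def by (rule bounded_linear.suminf[OF bl sq_summable[OF contr]])
  also have "\<dots> = (\<Sum>k. bcoef k * Re (cinner ((C ^^ k) x) x))"
    by (simp add: cinner_scaleR_left)
  finally have e: "Re (cinner (sq C x) x) = (\<Sum>k. bcoef k * Re (cinner ((C ^^ k) x) x))" .
  have sf: "summable (\<lambda>k. bcoef k * Re (cinner ((C ^^ k) x) x))"
    using bounded_linear.summable[OF bl sq_summable[OF contr, of x]] by (simp add: cinner_scaleR_left)
  define g where "g k = (if k = 0 then 2 else 0) * (norm x)^2 - \<bar>bcoef k\<bar> * (norm x)^2" for k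
  have gs: "g sums (2 * (norm x)^2 - (\<Sum>k. \<bar>bcoef k\<bar>) * (norm x)^2)"
    unfolding g_def
    by (intro sums_diff sums_mult2 summable_sums[OF summable_abs_bcoef])
       (use sums_single[of 0 "\<lambda>_. 2::real"] in simp)
  have le: "g k \<le> bcoef k * Re (cinner ((C ^^ k) x) x)" for k
  proof (cases "k = 0")
    case True thus ?thesis by (simp add: g_def Re_cinner_self)
  next
    case False
    have "norm ((C ^^ k) x) * norm x \<le> norm x * norm x"
      by (rule mult_right_mono[OF funpow_contr[OF contr] norm_ge_zero])
    hence "\<bar>Re (cinner ((C ^^ k) x) x)\<bar> \<le> (norm x)^2"
      using Re_cinner_bound[of "(C ^^ k) x" x] by (simp add: power2_eq_square)
    hence "\<bar>bcoef k\<bar> * \<bar>Re (cinner ((C ^^ k) x) x)\<bar> \<le> \<bar>bcoef k\<bar> * (norm x)^2"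
      by (rule mult_left_mono) simp
    hence "\<bar>bcoef k * Re (cinner ((C ^^ k) x) x)\<bar> \<le> \<bar>bcoef k\<bar> * (norm x)^2"
      by (simp add: abs_mult)
    hence "- (\<bar>bcoef k\<bar> * (norm x)^2) \<le> bcoef k * Re (cinner ((C ^^ k) x) x)"
      by linarith
    thus ?thesis using False by (simp add: g_def)
  qed
  have "2 * (norm x)^2 - (\<Sum>k. \<bar>bcoef k\<bar>) * (norm x)^2 \<le> (\<Sum>k. bcoef k * Re (cinner ((C ^^ k) x) x))"
    using sums_unique[OF gs] suminf_le[OF le sums_summable[OF gs] sf] by simp
  moreover have "(\<Sum>k. \<bar>bcoef k\<bar>) * (norm x)^2 \<le> 2 * (norm x)^2"
    by (rule mult_right_mono[OF suminf_abs_bcoef]) simp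
  ultimately show ?thesis using e by linarith
qed


lemma psq_lim:
  fixes C :: "'a::chilbert \<Rightarrow> 'a"
  assumes contr: "\<And>x. norm (C x) \<le> norm x"
  shows "(\<lambda>N. psq C N x) \<longlonglongrightarrow> sq C x"
  unfolding psq_def sq_def by (rule summable_LIMSEQ[OF sq_summable[OF contr]])

lemma bl_psq:
  fixes C :: "'a::chilbert \<Rightarrow> 'a"
  assumes C: "bop C" shows "bounded_linear (psq C N)"
proof -
  have "bounded_linear (\<lambda>x. \<Sum>k<N. bcoef k *\<^sub>R (C ^^ k) x)"
    by (intro bounded_linear_sum bounded_linear_compose[OF bounded_linear_scaleR_right]
        bop_bl[OF bop_funpow[OF C]])
  thus ?thesis unfolding psq_def[abs_def] .
qed

lemma psq_norm:
  fixes C :: "'a::chilbert \<Rightarrow> 'a"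
  assumes contr: "\<And>x. norm (C x) \<le> norm x"
  shows "norm (psq C N y) \<le> 2 * norm y"
proof -
  have "norm (psq C N y) \<le> (\<Sum>k<N. norm (bcoef k *\<^sub>R (C ^^ k) y))"
    unfolding psq_def by (rule norm_sum)
  also have "\<dots> \<le> (\<Sum>k<N. \<bar>bcoef k\<bar> * norm y)"
    by (rule sum_mono) (simp add: mult_left_mono funpow_contr[OF contr])
  also have "\<dots> = (\<Sum>k<N. \<bar>bcoef k\<bar>) * norm y" by (simp add: sum_distrib_right)
  also have "\<dots> \<le> 2 * norm y" by (rule mult_right_mono[OF bcoef_partial]) simp
  finally show ?thesis .
qed

lemma psq_psq:
  fixes C :: "'a::chilbert \<Rightarrow> 'a"
  assumes C: "bop C"
  shows "psq C N (psq C N x) = (\<Sum>(i,j)\<in>{..<N}\<times>{..<N}. (bcoef i * bcoef j) *\<^sub>R (C ^^ (i+j)) x)"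
proof -
  interpret L: bounded_linear "psq C N" by (rule bl_psq[OF C])
  have "psq C N (psq C N x) = (\<Sum>j<N. bcoef j *\<^sub>R psq C N ((C ^^ j) x))"
    unfolding psq_def[of C N x] by (simp add: L.sum L.scaleR)
  also have "\<dots> = (\<Sum>j<N. \<Sum>i<N. (bcoef i * bcoef j) *\<^sub>R (C ^^ (i+j)) x)"
    unfolding psq_def by (simp add: scaleR_sum_right funpow_add mult.commute)
  also have "\<dots> = (\<Sum>i<N. \<Sum>j<N. (bcoef i * bcoef j) *\<^sub>R (C ^^ (i+j)) x)"
    by (rule sum.swap)
  also have "\<dots> = (\<Sum>(i,j)\<in>{..<N}\<times>{..<N}. (bcoef i * bcoef j) *\<^sub>R (C ^^ (i+j)) x)"
    by (rule sum.cartesian_product)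
  finally show ?thesis .
qed

lemma tri_eq:
  fixes C :: "'a::chilbert \<Rightarrow> 'a"
  shows "(\<Sum>(i,j)\<in>{(i,j). i+j<N}. (bcoef i * bcoef j) *\<^sub>R (C ^^ (i+j)) x)
      = (\<Sum>n<N. (\<Sum>i\<le>n. bcoef i * bcoef (n-i)) *\<^sub>R (C ^^ n) x)"
proof -
  have "(\<Sum>(i,j)\<in>{(i,j). i+j<N}. (bcoef i * bcoef j) *\<^sub>R (C ^^ (i+j)) x)
      = (\<Sum>n<N. \<Sum>i\<le>n. (bcoef i * bcoef (n-i)) *\<^sub>R (C ^^ (i + (n-i))) x)"
    by (rule sum.triangle_reindex)
  also have "\<dots> = (\<Sum>n<N. \<Sum>i\<le>n. (bcoef i * bcoef (n-i)) *\<^sub>R (C ^^ n) x)"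
    by (intro sum.cong refl) auto
  also have "\<dots> = (\<Sum>n<N. (\<Sum>i\<le>n. bcoef i * bcoef (n-i)) *\<^sub>R (C ^^ n) x)"
    by (simp add: scaleR_sum_left)
  finally show ?thesis .
qed

lemma tri_val:
  fixes C :: "'a::chilbert \<Rightarrow> 'a"
  assumes "N \<ge> 2"
  shows "(\<Sum>n<N. (\<Sum>i\<le>n. bcoef i * bcoef (n-i)) *\<^sub>R (C ^^ n) x) = x - C x"
  using assms
proof (induction N rule: nat_induct_at_least)
  case base
  show ?case by (simp add: numeral_2_eq_2 bcoef_conv)
next
  case (Suc n)
  thus ?case using Suc by (simp add: bcoef_conv)
qed

definition eb :: "nat \<Rightarrow> real" where
  "eb N = (\<Sum>(i,j)\<in>{..<N}\<times>{..<N}. \<bar>bcoef i\<bar> * \<bar>bcoef j\<bar>) - (\<Sum>(i,j)\<in>{(i,j). i+j<N}. \<bar>bcoef i\<bar> * \<bar>bcoef j\<bar>)"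

lemma eb_lim: "eb \<longlonglongrightarrow> 0"
proof -
  let ?B = "\<Sum>k. \<bar>bcoef k\<bar>"
  have sq: "(\<Sum>(i,j)\<in>{..<N}\<times>{..<N}. \<bar>bcoef i\<bar> * \<bar>bcoef j\<bar>) = (\<Sum>i<N. \<bar>bcoef i\<bar>) * (\<Sum>j<N. \<bar>bcoef j\<bar>)" for N
    by (simp add: sum_product sum.cartesian_product)
  have tr: "(\<Sum>(i,j)\<in>{(i,j). i+j<N}. \<bar>bcoef i\<bar> * \<bar>bcoef j\<bar>) = (\<Sum>n<N. \<Sum>i\<le>n. \<bar>bcoef i\<bar> * \<bar>bcoef (n-i)\<bar>)" for N
    by (rule sum.triangle_reindex)
  have l1: "(\<lambda>N. (\<Sum>i<N. \<bar>bcoef i\<bar>) * (\<Sum>j<N. \<bar>bcoef j\<bar>)) \<longlonglongrightarrow> ?B * ?B"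
    by (intro tendsto_mult summable_LIMSEQ summable_abs_bcoef)
  have "summable (\<lambda>k. norm \<bar>bcoef k\<bar>)" using summable_abs_bcoef by simp
  from Cauchy_product_sums[OF this this]
  have "(\<lambda>n. \<Sum>i\<le>n. \<bar>bcoef i\<bar> * \<bar>bcoef (n-i)\<bar>) sums (?B * ?B)" .
  hence l2: "(\<lambda>N. \<Sum>n<N. \<Sum>i\<le>n. \<bar>bcoef i\<bar> * \<bar>bcoef (n-i)\<bar>) \<longlonglongrightarrow> ?B * ?B"
    by (simp add: sums_def)
  have "eb \<longlonglongrightarrow> ?B * ?B - ?B * ?B"
    unfolding eb_def sq tr by (intro tendsto_diff l1 l2)
  thus ?thesis by simp
qed

lemma psq_psq_err:
  fixes C :: "'a::chilbert \<Rightarrow> 'a"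
  assumes C: "bop C" and contr: "\<And>x. norm (C x) \<le> norm x" and N: "N \<ge> 2"
  shows "norm (psq C N (psq C N x) - (x - C x)) \<le> eb N * norm x"
proof -
  let ?f = "\<lambda>(i,j). (bcoef i * bcoef j) *\<^sub>R (C ^^ (i+j)) x"
  let ?g = "\<lambda>(i,j). \<bar>bcoef i\<bar> * \<bar>bcoef j\<bar>"
  let ?S = "{..<N}\<times>{..<N}" and ?T = "{(i,j). i+j<N}"
  have fin: "finite ?S" by simp
  have sub: "?T \<subseteq> ?S" by auto
  have "psq C N (psq C N x) - (x - C x) = sum ?f ?S - sum ?f ?T"
    using psq_psq[OF C, of N x] tri_eq[where N=N and C=C and x=x] tri_val[OF N, where C=C and x=x] by simp
  also have "\<dots> = sum ?f (?S - ?T)" by (rule sum_diff[OF fin sub, symmetric])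
  finally have e: "psq C N (psq C N x) - (x - C x) = sum ?f (?S - ?T)" .
  have "norm (sum ?f (?S - ?T)) \<le> sum (\<lambda>p. norm (?f p)) (?S - ?T)" by (rule norm_sum)
  also have "\<dots> \<le> sum (\<lambda>p. ?g p * norm x) (?S - ?T)"
    by (rule sum_mono) (auto simp: abs_mult mult_left_mono funpow_contr[OF contr])
  also have "\<dots> = sum ?g (?S - ?T) * norm x" by (simp add: sum_distrib_right)
  also have "sum ?g (?S - ?T) = eb N" unfolding eb_def by (rule sum_diff[OF fin sub])
  finally show ?thesis using e by simp
qed

lemma sq_sq:
  fixes C :: "'a::chilbert \<Rightarrow> 'a"
  assumes C: "bop C" and contr: "\<And>x. norm (C x) \<le> norm x"
  shows "sq C (sq C x) = x - C x"
proof -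
  have L1: "(\<lambda>N. psq C N (psq C N x)) \<longlonglongrightarrow> sq C (sq C x)"
  proof (rule Lim_transform[OF psq_lim[OF contr, of "sq C x"]])
    have d: "psq C N (psq C N x) - psq C N (sq C x) = psq C N (psq C N x - sq C x)" for N
    proof -
      interpret L: bounded_linear "psq C N" by (rule bl_psq[OF C])
      show ?thesis by (simp add: L.diff)
    qed
    have "(\<lambda>N. psq C N x - sq C x) \<longlonglongrightarrow> 0" by (rule LIM_zero[OF psq_lim[OF contr]])
    hence "(\<lambda>N. 2 * norm (psq C N x - sq C x)) \<longlonglongrightarrow> 0"
      by (rule tendsto_mult_right_zero[OF tendsto_norm_zero])
    hence "(\<lambda>N. psq C N (psq C N x - sq C x)) \<longlonglongrightarrow> 0"
      by (rule Lim_null_comparison[rotated]) (intro always_eventually allI psq_norm[OF contr])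
    thus "(\<lambda>N. psq C N (psq C N x) - psq C N (sq C x)) \<longlonglongrightarrow> 0" by (simp only: d)
  qed
  have L2: "(\<lambda>N. psq C N (psq C N x)) \<longlonglongrightarrow> x - C x"
  proof -
    have "(\<lambda>N. eb N * norm x) \<longlonglongrightarrow> 0" by (rule tendsto_mult_left_zero[OF eb_lim])
    hence "(\<lambda>N. psq C N (psq C N x) - (x - C x)) \<longlonglongrightarrow> 0"
      by (rule Lim_null_comparison[rotated]) (rule eventually_sequentiallyI[of 2], rule psq_psq_err[OF C contr], assumption)
    thus ?thesis by (rule LIM_zero_cancel)
  qed
  show ?thesis using LIMSEQ_unique[OF L1 L2] .
qed



lemma sadj_sym: "sadj D \<Longrightarrow> cinner (D x) y = cinner x (D y)"
  unfolding sadj_def by blast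

lemma sqrt_op:
  fixes D :: "'a::chilbert \<Rightarrow> 'a"
  assumes D: "bop D" and saD: "sadj D"
  obtains S where "bop S" "sadj S" "\<And>x. S (S x) = D (D x)" "\<And>x. 0 \<le> Re (cinner (S x) x)"
    "\<And>B x. bop B \<Longrightarrow> (\<And>y. B (D y) = D (B y)) \<Longrightarrow> B (S x) = S (B x)"
    "\<And>K. closed_csubspace K \<Longrightarrow> D ` K \<subseteq> K \<Longrightarrow> S ` K \<subseteq> K"
proof -
  obtain M where M: "M > 0" "\<And>x. norm (D x) \<le> norm x * M" using bop_bound[OF D] by blast
  define a where "a = 1 / M^2"
  have a: "a > 0" "a * M^2 = 1" using M(1) by (auto simp: a_def)
  define C where "C x = x - a *\<^sub>R D (D x)" for x
  have C: "bop C"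
  proof -
    have "bop (\<lambda>x. id x - a *\<^sub>R (D \<circ> D) x)"
      by (rule bop_minus_op[OF bop_id bop_scaleR_op[OF bop_comp[OF D D]]])
    thus ?thesis unfolding C_def[abs_def] by simp
  qed
  have contr: "norm (C x) \<le> norm x" for x
  proof -
    let ?y = "D (D x)"
    have xy: "cinner x ?y = of_real ((norm (D x))^2)"
      using sadj_sym[OF saD, of x "D x"] by (simp add: cinner_self_real)
    have yx: "cinner ?y x = of_real ((norm (D x))^2)"
      using sadj_sym[OF saD, of "D x" x] by (simp add: cinner_self_real)
    have cc: "cinner (C x) (C x) = cinner x x - of_real a * cinner x ?y - of_real a * cinner ?y x
        + of_real (a * a) * cinner ?y ?y"
      unfolding C_def by (simp add: cinner_diff_left cinner_diff_right cinner_scaleR_left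
          cinner_scaleR_right algebra_simps)
    have "(norm (C x))^2 = (norm x)^2 - 2 * a * (norm (D x))^2 + a * a * (norm ?y)^2"
      using arg_cong[of _ _ Re, OF cc] xy yx by (simp add: Re_cinner_self cinner_self_real)
    moreover have "norm ?y \<le> norm (D x) * M" by (rule M(2))
    hence "(norm ?y)^2 \<le> (norm (D x))^2 * M^2"
      by (metis norm_ge_zero power_mono power_mult_distrib)
    hence "a * a * (norm ?y)^2 \<le> a * a * ((norm (D x))^2 * M^2)"
      using a by (intro mult_left_mono) auto
    moreover have "a * a * ((norm (D x))^2 * M^2) = a * (norm (D x))^2"
      using a(2) by (simp add: algebra_simps)
    moreover have "a * (norm (D x))^2 \<ge> 0" using a by simp
    ultimately have "(norm (C x))^2 \<le> (norm x)^2" by linarith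
    thus ?thesis by (simp add: power2_le_iff_abs_le)
  qed
  have saC: "sadj C"
    unfolding sadj_def C_def
    by (simp add: cinner_diff_left cinner_diff_right cinner_scaleR_left cinner_scaleR_right
        sadj_sym[OF saD])
  define S where "S x = M *\<^sub>R sq C x" for x
  have bS: "bop S" unfolding S_def[abs_def] by (rule bop_scaleR_op[OF bop_sq[OF C contr]])
  have bsq: "bop (sq C)" by (rule bop_sq[OF C contr])
  show ?thesis
  proof (rule that)
    show "bop S" by (rule bS)
    show "sadj S" using sq_sadj[OF saC contr] unfolding sadj_def S_def
      by (simp add: cinner_scaleR_left cinner_scaleR_right)
    fix x
    have "S (S x) = (M * M) *\<^sub>R sq C (sq C x)"
      unfolding S_def by (simp add: bop_scaleR[OF bsq])
    also have "\<dots> = (M * M) *\<^sub>R (a *\<^sub>R D (D x))" by (simp add: sq_sq[OF C contr] C_def)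
    also have "\<dots> = D (D x)" using a(2) by (simp add: power2_eq_square mult.commute)
    finally show "S (S x) = D (D x)" .
    show "0 \<le> Re (cinner (S x) x)"
      unfolding S_def using sq_pos[OF contr, of x] M(1) by (simp add: cinner_scaleR_left)
  next
    fix B x
    assume B: "bop B" and BD: "\<And>y. B (D y) = D (B y)"
    have "B (C y) = C (B y)" for y unfolding C_def by (simp add: bop_diff[OF B] bop_scaleR[OF B] BD)
    hence "B (sq C x) = sq C (B x)" by (intro sq_comm[OF B contr])
    thus "B (S x) = S (B x)" unfolding S_def by (simp add: bop_scaleR[OF B])
  next
    fix K :: "'a set"
    assume K: "closed_csubspace K" and DK: "D ` K \<subseteq> K"
    have cs: "csubspace K" using K unfolding closed_csubspace_def by simp
    have "C ` K \<subseteq> K"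
    proof
      fix y assume "y \<in> C ` K"
      then obtain x where x: "x \<in> K" "y = C x" by auto
      have "D (D x) \<in> K" using DK x by auto
      hence "- (a *\<^sub>R D (D x)) \<in> K" using csubspace_scaleR[OF cs, of _ "- a"] by simp
      hence "x + - (a *\<^sub>R D (D x)) \<in> K" using cs x unfolding csubspace_def by blast
      thus "y \<in> K" using x by (simp add: C_def)
    qed
    hence "sq C x \<in> K" if "x \<in> K" for x using sq_subspace[OF K _ that contr] by blast
    thus "S ` K \<subseteq> K" unfolding S_def using csubspace_scaleR[OF cs] by auto
  qed
qed


lemma closed_kernel:
  fixes N :: "'a::chilbert \<Rightarrow> 'a"
  assumes N: "bop N" and K: "closed_csubspace K"
  shows "closed_csubspace {x\<in>K. N x = 0}"
proof -
  have cs: "csubspace K" "closed K" using K unfolding closed_csubspace_def by auto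
  have "closed {x. N x = 0}"
    using continuous_closed_preimage_constant[OF linear_continuous_on[OF bop_bl[OF N]], of UNIV 0] by simp
  hence "closed {x\<in>K. N x = 0}" using closed_Int[OF cs(2)] by (simp add: Collect_conj_eq)
  moreover have "csubspace {x\<in>K. N x = 0}"
    using cs(1) unfolding csubspace_def by (auto simp: bop_zero[OF N] bop_add[OF N] bop_scaleC[OF N])
  ultimately show ?thesis unfolding closed_csubspace_def by simp
qed

lemma Re_cinner_shift:
  "Re (cinner (A x - r *\<^sub>R x) x) = Re (cinner (A x) x) - r * (norm (x::'a::chilbert))^2"
  by (simp add: cinner_diff_left cinner_scaleR_left Re_cinner_self)

lemma schur_sign:
  fixes A :: "'a::chilbert \<Rightarrow> 'a" and V :: "'g \<Rightarrow> 'a \<Rightarrow> 'a"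
  assumes irr: "irreducible_subrep G V K" and A: "bop A" and saA: "sadj A" and AK: "A ` K \<subseteq> K"
    and comm: "\<And>g x. g \<in> carrier G \<Longrightarrow> A (V g x) = V g (A x)"
    and Vb: "\<And>g. g \<in> carrier G \<Longrightarrow> bop (V g)"
  shows "(\<forall>x\<in>K. 0 \<le> Re (cinner (A x - r *\<^sub>R x) x)) \<or> (\<forall>x\<in>K. Re (cinner (A x - r *\<^sub>R x) x) \<le> 0)"
proof -
  have K: "closed_csubspace K" and Kinv: "rep_invariant G V K" and K0: "K \<noteq> {0}"
    and Kirr: "\<And>K'. closed_csubspace K' \<Longrightarrow> K' \<subseteq> K \<Longrightarrow> rep_invariant G V K' \<Longrightarrow> K' = {0} \<or> K' = K"
    using irr unfolding irreducible_subrep_def by blast+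
  have cs: "csubspace K" using K unfolding closed_csubspace_def by simp
  define D where "D x = A x - r *\<^sub>R x" for x
  have D: "bop D"
  proof -
    have "bop (\<lambda>x. A x - r *\<^sub>R id x)" by (rule bop_minus_op[OF A bop_scaleR_op[OF bop_id]])
    thus ?thesis unfolding D_def[abs_def] by simp
  qed
  have saD: "sadj D" using saA unfolding sadj_def D_def
    by (simp add: cinner_diff_left cinner_diff_right cinner_scaleR_left cinner_scaleR_right)
  have DK: "D ` K \<subseteq> K"
  proof
    fix y assume "y \<in> D ` K"
    then obtain x where x: "x \<in> K" "y = D x" by auto
    have "A x \<in> K" using AK x by auto
    moreover have "- (r *\<^sub>R x) \<in> K" using csubspace_scaleR[OF cs x(1), of "- r"] x by simp
    ultimately have "A x + - (r *\<^sub>R x) \<in> K" using cs unfolding csubspace_def by blast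
    thus "y \<in> K" using x by (simp add: D_def)
  qed
  have commD: "D (V g x) = V g (D x)" if "g \<in> carrier G" for g x
    using comm[OF that] bop_diff[OF Vb[OF that]] bop_scaleR[OF Vb[OF that]] by (simp add: D_def)
  obtain S where S: "bop S" "sadj S" "\<And>x. S (S x) = D (D x)" "\<And>x. 0 \<le> Re (cinner (S x) x)"
    "\<And>B x. bop B \<Longrightarrow> (\<And>y. B (D y) = D (B y)) \<Longrightarrow> B (S x) = S (B x)"
    "\<And>K. closed_csubspace K \<Longrightarrow> D ` K \<subseteq> K \<Longrightarrow> S ` K \<subseteq> K"
    using sqrt_op[OF D saD] by blast
  have SD: "D (S x) = S (D x)" for x using S(5)[OF D] by blast
  have SV: "V g (S x) = S (V g x)" if "g \<in> carrier G" for g x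
    using S(5)[OF Vb[OF that]] commD[OF that] by metis
  have SK: "S ` K \<subseteq> K" by (rule S(6)[OF K DK])
  define N where "N x = S x - D x" for x
  define P where "P x = S x + D x" for x
  have N: "bop N" unfolding N_def[abs_def] by (rule bop_minus_op[OF S(1) D])
  have NP: "N (P x) = 0" for x
    unfolding N_def P_def by (simp add: bop_add[OF S(1)] bop_add[OF D] S(3) SD)
  show ?thesis
  proof (cases "\<forall>x\<in>K. N x = 0")
    case True
    have "0 \<le> Re (cinner (A x - r *\<^sub>R x) x)" if "x \<in> K" for x
      using True that S(4)[of x] by (simp add: N_def D_def)
    thus ?thesis by blast
  next
    case False
    then obtain x1 where x1: "x1 \<in> K" "N x1 \<noteq> 0" by blast
    show ?thesis
    proof (cases "\<forall>x\<in>K. P x = 0")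
      case True
      have "Re (cinner (A x - r *\<^sub>R x) x) \<le> 0" if "x \<in> K" for x
      proof -
        have "A x - r *\<^sub>R x = - S x" using True that by (simp add: P_def D_def eq_neg_iff_add_eq_0 add.commute)
        thus ?thesis using S(4)[of x] by (simp add: cinner_minus_left)
      qed
      thus ?thesis by blast
    next
      case False
      then obtain x2 where x2: "x2 \<in> K" "P x2 \<noteq> 0" by blast
      let ?K' = "{x\<in>K. N x = 0}"
      have c: "closed_csubspace ?K'" by (rule closed_kernel[OF N K])
      have inv: "rep_invariant G V ?K'"
        unfolding rep_invariant_def
      proof (intro ballI subsetI)
        fix g y assume g: "g \<in> carrier G" and "y \<in> V g ` ?K'"
        then obtain x where x: "x \<in> K" "N x = 0" "y = V g x" by auto
        have "y \<in> K" using Kinv g x unfolding rep_invariant_def by blast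
        moreover have "N y = V g (N x)"
          unfolding N_def x(3) using SV[OF g] commD[OF g] bop_diff[OF Vb[OF g]] by simp
        ultimately show "y \<in> ?K'" using x(2) bop_zero[OF Vb[OF g]] by simp
      qed
      have "P x2 \<in> K"
        using SK DK x2(1) cs unfolding P_def csubspace_def by blast
      hence "P x2 \<in> ?K'" using NP by simp
      hence "?K' \<noteq> {0}" using x2(2) by blast
      moreover have "?K' \<noteq> K" using x1 by blast
      ultimately show ?thesis using Kirr[OF c _ inv] by blast
    qed
  qed
qed


lemma mid1: "(u::real) < c \<Longrightarrow> u < (u + c) / 2 \<and> (u + c) / 2 < c" by auto
lemma mid2: "(u::real) > c \<Longrightarrow> u > (u + c) / 2 \<and> (u + c) / 2 > c" by auto

lemma schur:
  fixes A :: "'a::chilbert \<Rightarrow> 'a" and V :: "'g \<Rightarrow> 'a \<Rightarrow> 'a"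
  assumes irr: "irreducible_subrep G V K" and A: "bop A" and saA: "sadj A" and AK: "A ` K \<subseteq> K"
    and comm: "\<And>g x. g \<in> carrier G \<Longrightarrow> A (V g x) = V g (A x)"
    and Vb: "\<And>g. g \<in> carrier G \<Longrightarrow> bop (V g)"
  shows "\<exists>c. \<forall>x\<in>K. A x = c *\<^sub>R x"
proof -
  note sgn = schur_sign[OF irr A saA AK comm Vb]
  have K0: "K \<noteq> {0}" and K: "closed_csubspace K" using irr unfolding irreducible_subrep_def by blast+
  have cs: "csubspace K" using K unfolding closed_csubspace_def by simp
  have "0 \<in> K" using cs unfolding csubspace_def by simp
  then obtain x0 where x0: "x0 \<in> K" "x0 \<noteq> 0" using K0 by blast
  define q where "q x = Re (cinner (A x) x)" for x
  define c where "c = q x0 / (norm x0)^2"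
  have n0: "(norm x0)^2 > 0" using x0 by simp
  have qx0: "q x0 = c * (norm x0)^2" using n0 by (simp add: c_def)
  have qc: "q x = c * (norm x)^2" if x: "x \<in> K" for x
  proof (rule ccontr)
    assume ne: "q x \<noteq> c * (norm x)^2"
    hence xn: "x \<noteq> 0" by (auto simp: q_def)
    have nx: "(norm x)^2 > 0" using xn by simp
    show False
    proof (cases "q x < c * (norm x)^2")
      case True
      define r where "r = (q x / (norm x)^2 + c) / 2"
      have u: "q x / (norm x)^2 < c" using True nx by (simp add: field_simps)
      have r1a: "q x / (norm x)^2 < r" using mid1[OF u] unfolding r_def by blast
      have r1b: "r < c" using mid1[OF u] unfolding r_def by blast
      note r1 = r1a r1b
      have "q x < r * (norm x)^2" using r1(1) nx by (simp add: pos_divide_less_eq)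
      hence "q x - r * (norm x)^2 < 0" by linarith
      moreover have "q x0 - r * (norm x0)^2 > 0" using r1(2) n0 qx0
        by (simp add: algebra_simps mult_strict_right_mono)
      ultimately show False using sgn[of r] x x0(1) by (auto simp: Re_cinner_shift q_def)
    next
      case False
      hence True': "q x > c * (norm x)^2" using ne by simp
      define r where "r = (q x / (norm x)^2 + c) / 2"
      have u: "q x / (norm x)^2 > c" using True' nx by (simp add: field_simps)
      have r1a: "q x / (norm x)^2 > r" using mid2[OF u] unfolding r_def by blast
      have r1b: "r > c" using mid2[OF u] unfolding r_def by blast
      note r1 = r1a r1b
      have "r * (norm x)^2 < q x" using r1(1) nx by (simp add: pos_less_divide_eq)
      hence "q x - r * (norm x)^2 > 0" by linarith
      moreover have "q x0 - r * (norm x0)^2 < 0" using r1(2) n0 qx0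
        by (simp add: algebra_simps mult_strict_right_mono)
      ultimately show False using sgn[of r] x x0(1) by (auto simp: Re_cinner_shift q_def)
    qed
  qed
  define D where "D x = A x - c *\<^sub>R x" for x
  have saD: "cinner (D x) y = cinner x (D y)" for x y using saA unfolding sadj_def D_def
    by (simp add: cinner_diff_left cinner_diff_right cinner_scaleR_left cinner_scaleR_right)
  have D0: "Re (cinner (D x) x) = 0" if "x \<in> K" for x
    using qc[OF that] unfolding D_def by (simp add: Re_cinner_shift q_def)
  have DK: "D x \<in> K" if "x \<in> K" for x
  proof -
    have "A x \<in> K" using AK that by auto
    moreover have "- (c *\<^sub>R x) \<in> K" using csubspace_scaleR[OF cs that, of "- c"] by simp
    ultimately have "A x + - (c *\<^sub>R x) \<in> K" using cs unfolding csubspace_def by blast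
    thus ?thesis by (simp add: D_def)
  qed
  have Dlin: "D (x + y) = D x + D y" for x y unfolding D_def by (simp add: bop_add[OF A] scaleR_add_right)
  have "D x = 0" if x: "x \<in> K" for x
  proof -
    let ?y = "D x"
    have y: "?y \<in> K" by (rule DK[OF x])
    have xy: "x + ?y \<in> K" using x y cs unfolding csubspace_def by blast
    have "0 = Re (cinner (D (x + ?y)) (x + ?y))" using D0[OF xy] by simp
    also have "\<dots> = Re (cinner (D x) x) + Re (cinner (D x) ?y) + Re (cinner (D ?y) x) + Re (cinner (D ?y) ?y)"
      by (simp add: Dlin cinner_add_left cinner_add_right)
    also have "Re (cinner (D ?y) x) = Re (cinner (D x) ?y)"
    proof -
      have "cinner (D ?y) x = cinner ?y (D x)" by (rule saD)
      also have "\<dots> = cnj (cinner (D x) ?y)" by (rule cinner_cnj_commute)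
      finally show ?thesis by simp
    qed
    finally have "0 = 2 * Re (cinner ?y ?y)" using D0[OF x] D0[OF y] by simp
    hence "norm ?y = 0" by (simp add: Re_cinner_self)
    thus ?thesis by simp
  qed
  hence "\<forall>x\<in>K. A x = c *\<^sub>R x" unfolding D_def by simp
  thus ?thesis by blast
qed



lemma parallelogram:
  "(norm (a + b))^2 + (norm (a - b))^2 = 2 * (norm a)^2 + 2 * (norm (b::'a::chilbert))^2"
proof -
  have "cinner (a+b) (a+b) + cinner (a-b) (a-b) = 2 * cinner a a + 2 * cinner b b"
    by (simp add: cinner_add_left cinner_add_right cinner_diff_left cinner_diff_right)
  hence "Re (cinner (a+b) (a+b)) + Re (cinner (a-b) (a-b)) = 2 * Re (cinner a a) + 2 * Re (cinner b b)"
    by (metis plus_complex.sel(1) Re_complex_of_real mult_2 of_real_numeral)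
  thus ?thesis by (simp add: Re_cinner_self)
qed

lemma csubspace_add: "csubspace M \<Longrightarrow> x \<in> M \<Longrightarrow> y \<in> M \<Longrightarrow> x + y \<in> M"
  unfolding csubspace_def by blast
lemma csubspace_scaleC: "csubspace M \<Longrightarrow> x \<in> M \<Longrightarrow> scaleC c x \<in> M"
  unfolding csubspace_def by blast
lemma csubspace_0: "csubspace M \<Longrightarrow> 0 \<in> M"
  unfolding csubspace_def by blast
lemma csubspace_minus: "csubspace M \<Longrightarrow> x \<in> M \<Longrightarrow> - x \<in> M"
  using csubspace_scaleC[of M x "-1"] by (simp add: scaleC_minus1)
lemma csubspace_diff: "csubspace M \<Longrightarrow> x \<in> M \<Longrightarrow> y \<in> M \<Longrightarrow> x - y \<in> M"
  using csubspace_add[of M x "-y"] csubspace_minus[of M y] by simp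

lemma para_bound:
  fixes M :: "'a::chilbert set"
  assumes cs: "csubspace M" and u: "u \<in> M" and v: "v \<in> M"
  shows "(norm (u - v))^2 \<le> 2 * (norm (z - u))^2 + 2 * (norm (z - v))^2 - 4 * (infdist z M)^2"
proof -
  let ?c = "(1/2::real) *\<^sub>R (u + v)"
  have c: "?c \<in> M" by (intro csubspace_scaleR csubspace_add cs u v)
  have "infdist z M \<le> norm (z - ?c)" using infdist_le[OF c, of z] by (simp add: dist_norm)
  hence "(infdist z M)^2 \<le> (norm (z - ?c))^2" by (simp add: infdist_nonneg power_mono)
  moreover have "(z - u) + (z - v) = 2 *\<^sub>R (z - ?c)" by (simp add: algebra_simps scaleR_2)
  hence "(norm ((z - u) + (z - v)))^2 = 4 * (norm (z - ?c))^2" by (simp add: power_mult_distrib)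
  moreover have "(norm ((z - u) - (z - v)))^2 = (norm (u - v))^2"
    using norm_minus_commute[of v u] by simp
  ultimately show ?thesis using parallelogram[of "z - u" "z - v"] by linarith
qed

lemma orth_complement_nonzero:
  fixes M :: "'a::chilbert set"
  assumes M: "closed_csubspace M" and ne: "M \<noteq> UNIV"
  shows "\<exists>y. y \<noteq> 0 \<and> (\<forall>m\<in>M. cinner m y = 0)"
proof -
  have cs: "csubspace M" and cl: "closed M" using M unfolding closed_csubspace_def by auto
  obtain z where z: "z \<notin> M" using ne by blast
  have Mne: "M \<noteq> {}" using csubspace_0[OF cs] by blast
  define d where "d = infdist z M"
  have d0: "d \<ge> 0" by (simp add: d_def infdist_nonneg)
  have "\<exists>m\<in>M. dist z m < d + 1 / (real n + 1)" for n
  proof -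
    have "infdist z M < d + 1 / (real n + 1)" unfolding d_def by (simp add: add_pos_pos)
    thus ?thesis using cINF_less_iff[OF Mne, of "dist z"] by (simp add: infdist_notempty[OF Mne])
  qed
  then obtain m where m: "\<And>n. m n \<in> M" "\<And>n. norm (z - m n) < d + 1 / (real n + 1)"
    unfolding dist_norm by metis
  have mge: "d \<le> norm (z - m n)" for n using infdist_le[OF m(1), of z n] by (simp add: d_def dist_norm)
  have "Cauchy m"
  proof (rule CauchyI)
    fix e :: real assume e: "0 < e"
    obtain N :: nat where N: "(8 * d + 4) / e^2 < real N" using reals_Archimedean2 by blast
    show "\<exists>N. \<forall>p\<ge>N. \<forall>q\<ge>N. norm (m p - m q) < e"
    proof (intro exI allI impI)
      fix p q assume p: "N \<le> p" and q: "N \<le> q"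
      define \<delta> where "\<delta> = 1 / (real N + 1)"
      have \<delta>: "0 < \<delta>" "\<delta> \<le> 1" unfolding \<delta>_def by (auto simp: field_simps)
      have "1 / (real p + 1) \<le> \<delta>" "1 / (real q + 1) \<le> \<delta>" unfolding \<delta>_def using p q
        by (auto intro!: divide_left_mono)
      hence bp: "norm (z - m p) < d + \<delta>" and bq: "norm (z - m q) < d + \<delta>" using m(2)[of p] m(2)[of q] by linarith+
      have "(norm (z - m p))^2 \<le> (d + \<delta>)^2" using bp by (intro power_mono) auto
      moreover have "(norm (z - m q))^2 \<le> (d + \<delta>)^2" using bq by (intro power_mono) auto
      ultimately have "(norm (m p - m q))^2 \<le> 4 * (d + \<delta>)^2 - 4 * d^2"
        using para_bound[OF cs m(1) m(1), of p q z] unfolding d_def by linarith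
      also have "\<dots> = 8 * d * \<delta> + 4 * \<delta> * \<delta>" by (simp add: power2_eq_square algebra_simps)
      also have "\<dots> \<le> 8 * d * \<delta> + 4 * \<delta>" using \<delta> by (simp add: mult_left_le)
      also have "\<dots> = (8 * d + 4) * \<delta>" by (simp add: algebra_simps)
      also have "\<dots> < e^2"
      proof -
        have "(8 * d + 4) < e^2 * real N" using N e by (simp add: field_simps)
        also have "\<dots> < e^2 * (real N + 1)" using e by simp
        finally show ?thesis unfolding \<delta>_def using e by (simp add: field_simps)
      qed
      finally have "(norm (m p - m q))^2 < e^2" .
      thus "norm (m p - m q) < e" using e by (simp add: power_less_imp_less_base)
    qed
  qed
  then obtain m0 where lim: "m \<longlonglongrightarrow> m0" using Cauchy_convergent_iff convergent_def by blast
  have m0: "m0 \<in> M" by (rule Lim_in_closed_set[OF cl _ _ lim]) (auto simp: m(1))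
  have "(\<lambda>n. norm (z - m n)) \<longlonglongrightarrow> norm (z - m0)" by (intro tendsto_norm tendsto_diff tendsto_const lim)
  moreover have "(\<lambda>n. d + 1 / (real n + 1)) \<longlonglongrightarrow> d + 0"
    by (intro tendsto_add tendsto_const) (use LIMSEQ_inverse_real_of_nat in \<open>simp add: inverse_eq_divide add.commute\<close>)
  ultimately have nm: "norm (z - m0) \<le> d"
    using m(2) by (intro LIMSEQ_le[where X="\<lambda>n. norm (z - m n)" and Y="\<lambda>n. d + 1 / (real n + 1)"])
       (auto intro: less_imp_le)
  define y where "y = z - m0"
  have y0: "y \<noteq> 0" using z m0 by (auto simp: y_def)
  have orth: "cinner u y = 0" if u: "u \<in> M" for u
  proof (cases "u = 0")
    case True thus ?thesis by simp
  next
    case False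
    hence nu: "norm u > 0" by simp
    define t where "t = cinner u y / of_real ((norm u)^2)"
    define w where "w = y - scaleC t u"
    have uw: "cinner u w = 0" using nu unfolding w_def t_def
      by (simp add: cinner_diff_right cinner_scaleC_right cinner_self_real)
    hence wu: "cinner (scaleC t u) w = 0" by (simp add: cinner_scaleC_left)
    have ye: "y = w + scaleC t u" by (simp add: w_def)
    have "(norm y)^2 = (norm w)^2 + (norm (scaleC t u))^2"
      using pythagoras[of w "scaleC t u"] wu cinner_cnj_commute[of w "scaleC t u"] ye by (simp add: add.commute)
    moreover have "m0 + scaleC t u \<in> M" by (intro csubspace_add cs m0 csubspace_scaleC u)
    hence "d \<le> norm (z - (m0 + scaleC t u))" using infdist_le[of _ M z] by (simp add: d_def dist_norm)
    hence "norm y \<le> norm w" using nm by (simp add: w_def y_def algebra_simps)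
    hence "(norm y)^2 \<le> (norm w)^2" by (simp add: power_mono)
    ultimately have "norm (scaleC t u) = 0" by simp
    hence "t = 0" using nu by (simp add: norm_scaleC)
    thus ?thesis using nu by (simp add: t_def)
  qed
  show ?thesis using y0 orth by blast
qed



locale sa_op =
  fixes D :: "'a::chilbert set" and T :: "'a \<Rightarrow> 'a"
  assumes dd: "densely_defined D T" and sa: "self_adjoint D T"
begin

lemma csD: "csubspace D" using dd unfolding densely_defined_def by simp
lemma dense: "closure D = UNIV" using dd unfolding densely_defined_def by simp
lemma T_add: "x \<in> D \<Longrightarrow> y \<in> D \<Longrightarrow> T (x + y) = T x + T y"
  using dd unfolding densely_defined_def clinear_on_def by blast
lemma T_scaleC: "x \<in> D \<Longrightarrow> T (scaleC c x) = scaleC c (T x)"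
  using dd unfolding densely_defined_def clinear_on_def by blast
lemma T_zero: "T 0 = 0"
  using T_scaleC[OF csubspace_0[OF csD], of 0] by simp
lemma T_minus: "x \<in> D \<Longrightarrow> T (- x) = - T x"
  using T_scaleC[of x "-1"] by (simp add: scaleC_minus1)
lemma T_diff: "x \<in> D \<Longrightarrow> y \<in> D \<Longrightarrow> T (x - y) = T x - T y"
  using T_add[of x "- y"] T_minus[of y] csubspace_minus[OF csD, of y] by simp
lemma T_sym: "x \<in> D \<Longrightarrow> y \<in> D \<Longrightarrow> cinner (T x) y = cinner x (T y)"
  using sa unfolding self_adjoint_def by blast
lemma adj_D: "(\<And>x. x \<in> D \<Longrightarrow> cinner (T x) y = cinner x z) \<Longrightarrow> y \<in> D"
  using sa unfolding self_adjoint_def adjoint_domain_def by blast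

lemma eq_by_dense: "(\<And>d. d \<in> D \<Longrightarrow> cinner d u = cinner d v) \<Longrightarrow> u = v"
proof -
  assume h: "\<And>d. d \<in> D \<Longrightarrow> cinner d u = cinner d v"
  have "u - v = 0" by (rule orth_dense_zero[OF dense]) (simp add: cinner_diff_right h)
  thus ?thesis by simp
qed

definition cc :: "real \<Rightarrow> complex" where "cc e = \<i> * complex_of_real e"

lemma cc_cnj: "cnj (cc e) = - cc e" by (simp add: cc_def)
lemma cc_norm: "cnj (cc e) * cc e = complex_of_real (e^2)" by (simp add: cc_def complex_eq_iff power2_eq_square)

lemma norm_id:
  assumes x: "x \<in> D"
  shows "(norm (T x + scaleC (cc e) x))^2 = (norm (T x))^2 + e^2 * (norm x)^2"
proof -
  have r: "cinner x (T x) = cinner (T x) x" using T_sym[OF x x] by simp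
  have "cinner (T x + scaleC (cc e) x) (T x + scaleC (cc e) x)
      = cinner (T x) (T x) + (cc e + cnj (cc e)) * cinner (T x) x + cnj (cc e) * cc e * cinner x x"
    by (simp add: cinner_add_left cinner_add_right cinner_scaleC_left cinner_scaleC_right r algebra_simps)
  also have "\<dots> = cinner (T x) (T x) + complex_of_real (e^2) * cinner x x"
    by (simp add: cc_norm, simp add: cc_cnj)
  finally have "Re (cinner (T x + scaleC (cc e) x) (T x + scaleC (cc e) x))
     = Re (cinner (T x) (T x)) + e^2 * Re (cinner x x)" by simp
  thus ?thesis by (simp add: Re_cinner_self)
qed

lemma norm_le1: "x \<in> D \<Longrightarrow> norm (T x) \<le> norm (T x + scaleC (cc e) x)"
proof -
  assume x: "x \<in> D"
  have "0 \<le> e^2 * (norm x)^2" by simp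
  hence "(norm (T x))^2 \<le> (norm (T x + scaleC (cc e) x))^2" using norm_id[OF x, of e] by linarith
  thus ?thesis by (rule power2_le_imp_le) simp
qed

lemma norm_le2: "x \<in> D \<Longrightarrow> \<bar>e\<bar> * norm x \<le> norm (T x + scaleC (cc e) x)"
proof -
  assume x: "x \<in> D"
  have "(\<bar>e\<bar> * norm x)^2 = e^2 * (norm x)^2" by (simp add: power_mult_distrib)
  also have "\<dots> \<le> (norm (T x + scaleC (cc e) x))^2" using norm_id[OF x, of e] by simp
  finally show ?thesis by (rule power2_le_imp_le) simp
qed

lemma Tc_diff: "x \<in> D \<Longrightarrow> y \<in> D \<Longrightarrow>
  (T x + scaleC c x) - (T y + scaleC c y) = T (x - y) + scaleC c (x - y)"
  by (simp add: T_diff scaleC_diff_right algebra_simps)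

lemma range_closed:
  assumes e: "e \<noteq> 0"
  shows "closed ((\<lambda>x. T x + scaleC (cc e) x) ` D)"
  unfolding closed_sequential_limits
proof (intro allI impI, elim conjE)
  fix ys l assume ys: "\<forall>n. ys n \<in> (\<lambda>x. T x + scaleC (cc e) x) ` D" and lim: "ys \<longlonglongrightarrow> l"
  have "\<forall>n. \<exists>x. x \<in> D \<and> ys n = T x + scaleC (cc e) x" using ys by blast
  then obtain xs where "\<forall>n. xs n \<in> D \<and> ys n = T (xs n) + scaleC (cc e) (xs n)"
    using choice[of "\<lambda>n x. x \<in> D \<and> ys n = T x + scaleC (cc e) x"] by blast
  hence xs: "\<And>n. xs n \<in> D" "\<And>n. ys n = T (xs n) + scaleC (cc e) (xs n)" by auto
  have cy: "Cauchy ys" using lim by (rule LIMSEQ_imp_Cauchy)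
  have dif: "norm (xs p - xs q) \<le> norm (ys p - ys q) / \<bar>e\<bar>"
    and difT: "norm (T (xs p) - T (xs q)) \<le> norm (ys p - ys q)" for p q
  proof -
    have ed: "ys p - ys q = T (xs p - xs q) + scaleC (cc e) (xs p - xs q)"
      using Tc_diff[OF xs(1) xs(1), where c="cc e"] xs(2) by simp
    have xd: "xs p - xs q \<in> D" by (intro csubspace_diff csD xs(1))
    have "\<bar>e\<bar> * norm (xs p - xs q) \<le> norm (ys p - ys q)" using norm_le2[OF xd, of e] ed by simp
    thus "norm (xs p - xs q) \<le> norm (ys p - ys q) / \<bar>e\<bar>" using e by (simp add: field_simps mult.commute)
    show "norm (T (xs p) - T (xs q)) \<le> norm (ys p - ys q)"
      using norm_le1[OF xd, of e] ed T_diff[OF xs(1) xs(1)] by simp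
  qed
  have "Cauchy xs"
  proof (rule CauchyI)
    fix r :: real assume r: "0 < r"
    obtain M where M: "\<forall>m\<ge>M. \<forall>n\<ge>M. norm (ys m - ys n) < r * \<bar>e\<bar>"
      using CauchyD[OF cy, of "r * \<bar>e\<bar>"] r e by auto
    show "\<exists>M. \<forall>m\<ge>M. \<forall>n\<ge>M. norm (xs m - xs n) < r"
    proof (intro exI allI impI)
      fix m n assume "M \<le> m" "M \<le> n"
      hence "norm (ys m - ys n) / \<bar>e\<bar> < r" using M e by (simp add: field_simps)
      thus "norm (xs m - xs n) < r" using dif[of m n] by linarith
    qed
  qed
  then obtain x where xl: "xs \<longlonglongrightarrow> x" using Cauchy_convergent_iff convergent_def by blast
  have "Cauchy (\<lambda>n. T (xs n))"
  proof (rule CauchyI)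
    fix r :: real assume r: "0 < r"
    obtain M where M: "\<forall>m\<ge>M. \<forall>n\<ge>M. norm (ys m - ys n) < r" using CauchyD[OF cy r] by auto
    show "\<exists>M. \<forall>m\<ge>M. \<forall>n\<ge>M. norm (T (xs m) - T (xs n)) < r"
    proof (intro exI allI impI)
      fix m n assume "M \<le> m" "M \<le> n"
      hence "norm (ys m - ys n) < r" using M by blast
      thus "norm (T (xs m) - T (xs n)) < r" using difT[of m n] by linarith
    qed
  qed
  then obtain w where wl: "(\<lambda>n. T (xs n)) \<longlonglongrightarrow> w" using Cauchy_convergent_iff convergent_def by blast
  have adj: "cinner (T u) x = cinner u w" if u: "u \<in> D" for u
  proof -
    have "(\<lambda>n. cinner (T u) (xs n)) \<longlonglongrightarrow> cinner (T u) x" by (rule cinner_continuous_right[OF xl])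
    moreover have "(\<lambda>n. cinner (T u) (xs n)) = (\<lambda>n. cinner u (T (xs n)))" using T_sym[OF u xs(1)] by simp
    moreover have "(\<lambda>n. cinner u (T (xs n))) \<longlonglongrightarrow> cinner u w" by (rule cinner_continuous_right[OF wl])
    ultimately have "(\<lambda>n. cinner (T u) (xs n)) \<longlonglongrightarrow> cinner u w" by simp
    thus ?thesis using LIMSEQ_unique[OF cinner_continuous_right[OF xl, of "T u"]] by blast
  qed
  have xD: "x \<in> D" by (rule adj_D[OF adj])
  have Tx: "T x = w" by (rule eq_by_dense) (use adj T_sym[OF _ xD] in simp)
  have "ys \<longlonglongrightarrow> w + scaleC (cc e) x"
    unfolding xs(2) by (intro tendsto_add wl bounded_linear.tendsto[OF bounded_linear_scaleC xl])
  hence "l = w + scaleC (cc e) x" using LIMSEQ_unique[OF lim] by blast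
  hence "l = T x + scaleC (cc e) x" using Tx by simp
  thus "l \<in> (\<lambda>x. T x + scaleC (cc e) x) ` D" using xD by blast
qed

lemma range_csubspace: "csubspace ((\<lambda>x. T x + scaleC c x) ` D)"
proof -
  have "0 \<in> (\<lambda>x. T x + scaleC c x) ` D" using csubspace_0[OF csD] T_zero by force
  moreover have "u + v \<in> (\<lambda>x. T x + scaleC c x) ` D"
    if uv: "u \<in> (\<lambda>x. T x + scaleC c x) ` D" "v \<in> (\<lambda>x. T x + scaleC c x) ` D" for u v
  proof -
    obtain x where x: "x \<in> D" "u = T x + scaleC c x" using uv(1) by blast
    obtain y where y: "y \<in> D" "v = T y + scaleC c y" using uv(2) by blast
    have "u + v = T (x + y) + scaleC c (x + y)" using x y by (simp add: T_add scaleC_add_right algebra_simps)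
    thus ?thesis using csubspace_add[OF csD x(1) y(1)] by blast
  qed
  moreover have "scaleC a u \<in> (\<lambda>x. T x + scaleC c x) ` D" if uin: "u \<in> (\<lambda>x. T x + scaleC c x) ` D" for a u
  proof -
    obtain x where x: "x \<in> D" "u = T x + scaleC c x" using uin by blast
    have "scaleC a u = T (scaleC a x) + scaleC c (scaleC a x)"
      using x by (simp add: T_scaleC scaleC_add_right scaleC_scaleC mult.commute)
    thus ?thesis using csubspace_scaleC[OF csD x(1)] by blast
  qed
  ultimately show ?thesis unfolding csubspace_def by blast
qed

lemma range_univ:
  assumes e: "e \<noteq> 0"
  shows "(\<lambda>x. T x + scaleC (cc e) x) ` D = UNIV"
proof (rule ccontr)
  assume ne: "(\<lambda>x. T x + scaleC (cc e) x) ` D \<noteq> UNIV"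
  have "closed_csubspace ((\<lambda>x. T x + scaleC (cc e) x) ` D)"
    unfolding closed_csubspace_def using range_csubspace range_closed[OF e] by blast
  from orth_complement_nonzero[OF this ne] obtain y where y: "y \<noteq> 0"
    "\<And>m. m \<in> (\<lambda>x. T x + scaleC (cc e) x) ` D \<Longrightarrow> cinner m y = 0" by blast
  have h: "cinner (T x) y = cinner x (scaleC (cc e) y)" if x: "x \<in> D" for x
  proof -
    have "cinner (T x + scaleC (cc e) x) y = 0" using y(2) x by blast
    hence "cinner (T x) y = - (cnj (cc e) * cinner x y)" by (simp add: cinner_add_left cinner_scaleC_left eq_neg_iff_add_eq_0)
    thus ?thesis by (simp add: cc_cnj cinner_scaleC_right)
  qed
  have yD: "y \<in> D" by (rule adj_D[OF h])
  have Ty: "T y = scaleC (cc e) y" by (rule eq_by_dense) (use h T_sym[OF _ yD] in simp)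
  have "cinner (T y) y = cinner y (T y)" by (rule T_sym[OF yD yD])
  hence "cnj (cc e) * cinner y y = cc e * cinner y y" by (simp add: Ty cinner_scaleC_left cinner_scaleC_right)
  hence "(cc e + cc e) * cinner y y = 0" by (simp add: cc_cnj algebra_simps)
  hence "cinner y y = 0" using e by (simp add: cc_def)
  thus False using y(1) by simp
qed


definition res :: "real \<Rightarrow> 'a \<Rightarrow> 'a" where
  "res e y = (THE x. x \<in> D \<and> T x + scaleC (cc e) x = y)"

lemma res_uniq:
  assumes e: "e \<noteq> 0" and x: "x \<in> D" and x': "x' \<in> D"
    and eq: "T x + scaleC (cc e) x = T x' + scaleC (cc e) x'"
  shows "x = x'"
proof -
  have xd: "x - x' \<in> D" by (intro csubspace_diff csD x x')
  have "T (x - x') + scaleC (cc e) (x - x') = 0" using Tc_diff[OF x x', of "cc e"] eq by simp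
  hence "\<bar>e\<bar> * norm (x - x') \<le> 0" using norm_le2[OF xd, of e] by simp
  thus ?thesis using e by (simp add: mult_le_0_iff)
qed

lemma res_prop:
  assumes e: "e \<noteq> 0"
  shows "res e y \<in> D" "T (res e y) + scaleC (cc e) (res e y) = y"
proof -
  have "y \<in> (\<lambda>x. T x + scaleC (cc e) x) ` D" using range_univ[OF e] by simp
  then obtain x where x: "x \<in> D" "T x + scaleC (cc e) x = y" by blast
  have "\<exists>!x. x \<in> D \<and> T x + scaleC (cc e) x = y"
    using x res_uniq[OF e] by blast
  hence "res e y \<in> D \<and> T (res e y) + scaleC (cc e) (res e y) = y"
    unfolding res_def by (rule theI')
  thus "res e y \<in> D" "T (res e y) + scaleC (cc e) (res e y) = y" by auto
qed

lemma res_left: "e \<noteq> 0 \<Longrightarrow> x \<in> D \<Longrightarrow> res e (T x + scaleC (cc e) x) = x"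
proof -
  assume e: "e \<noteq> 0" and x: "x \<in> D"
  show ?thesis by (rule res_uniq[OF e res_prop(1)[OF e] x]) (simp add: res_prop(2)[OF e])
qed

lemma res_bop:
  assumes e: "e \<noteq> 0"
  shows "bop (res e)"
proof (rule bopI[where K="1 / \<bar>e\<bar>"])
  note R = res_prop[OF e]
  fix x y
  have eq: "T (res e x + res e y) + scaleC (cc e) (res e x + res e y) = x + y"
    using R[of x] R[of y] by (simp add: T_add scaleC_add_right algebra_simps)
  have "res e x + res e y \<in> D" by (intro csubspace_add csD R)
  from res_left[OF e this, unfolded eq]
  show "res e (x + y) = res e x + res e y" .
  fix c
  have "T (scaleC c (res e x)) + scaleC (cc e) (scaleC c (res e x))
      = scaleC c (T (res e x)) + scaleC c (scaleC (cc e) (res e x))"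
    by (simp add: T_scaleC[OF R(1)] scaleC_scaleC mult.commute)
  also have "\<dots> = scaleC c x" by (simp add: scaleC_add_right[symmetric] R(2))
  finally have eq: "T (scaleC c (res e x)) + scaleC (cc e) (scaleC c (res e x)) = scaleC c x" .
  have "scaleC c (res e x) \<in> D" by (intro csubspace_scaleC csD R)
  from res_left[OF e this, unfolded eq]
  show "res e (scaleC c x) = scaleC c (res e x)" .
  have "\<bar>e\<bar> * norm (res e x) \<le> norm x" using norm_le2[OF R(1), of e] R(2) by simp
  thus "norm (res e x) \<le> norm x * (1 / \<bar>e\<bar>)" using e by (simp add: field_simps mult.commute)
qed

lemma res_T_bound: "e \<noteq> 0 \<Longrightarrow> norm (T (res e y)) \<le> norm y"
  using norm_le1[OF res_prop(1), of e y e] res_prop(2)[of e y] by simp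

lemma res_comm:
  assumes e: "e \<noteq> 0" and B: "bop B" and BD: "\<And>x. x \<in> D \<Longrightarrow> B x \<in> D"
    and BT: "\<And>x. x \<in> D \<Longrightarrow> T (B x) = B (T x)"
  shows "B (res e y) = res e (B y)"
proof -
  note R = res_prop[OF e]
  have "T (B (res e y)) + scaleC (cc e) (B (res e y)) = B (T (res e y)) + B (scaleC (cc e) (res e y))"
    by (simp add: BT[OF R(1)] bop_scaleC[OF B])
  also have "\<dots> = B y" by (simp add: bop_add[OF B, symmetric] R(2))
  finally have eq: "T (B (res e y)) + scaleC (cc e) (B (res e y)) = B y" .
  from res_left[OF e BD[OF R(1)[of y]], unfolded eq] show ?thesis by simp
qed

definition Aop :: "'a \<Rightarrow> 'a" where "Aop y = res (-1) (res 1 y)"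

lemma cc_1: "cnj (cc (-1)) = cc 1" by (simp add: cc_def)

lemma Aop_inner: "cinner (Aop y) z = cinner (res 1 y) (res 1 z)"
proof -
  let ?w = "Aop y" and ?r = "res 1 z"
  have wD: "?w \<in> D" and w: "T ?w + scaleC (cc (-1)) ?w = res 1 y"
    unfolding Aop_def using res_prop[of "-1"] by auto
  have rD: "?r \<in> D" and r: "T ?r + scaleC (cc 1) ?r = z" using res_prop[of 1] by auto
  have "cinner ?w z = cinner ?w (T ?r + scaleC (cc 1) ?r)" using r by simp
  also have "\<dots> = cinner ?w (T ?r) + cc 1 * cinner ?w ?r"
    by (simp add: cinner_add_right cinner_scaleC_right)
  also have "\<dots> = cinner (T ?w) ?r + cinner (scaleC (cc (-1)) ?w) ?r"
    using T_sym[OF wD rD] by (simp add: cinner_scaleC_left cc_1)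
  also have "\<dots> = cinner (T ?w + scaleC (cc (-1)) ?w) ?r" by (simp add: cinner_add_left)
  also have "\<dots> = cinner (res 1 y) ?r" by (simp only: w)
  finally show ?thesis .
qed

lemma Aop_bop: "bop Aop"
proof -
  have "bop (res (-1) \<circ> res 1)" by (intro bop_comp res_bop) auto
  thus ?thesis unfolding Aop_def[abs_def] by (simp add: o_def)
qed

lemma Aop_sadj: "sadj Aop"
  unfolding sadj_def
proof (intro allI)
  fix x y
  have "cinner x (Aop y) = cnj (cinner (Aop y) x)" by (rule cinner_cnj_commute)
  also have "\<dots> = cnj (cinner (res 1 y) (res 1 x))" by (simp add: Aop_inner)
  also have "\<dots> = cinner (res 1 x) (res 1 y)" by (rule cinner_cnj_commute[symmetric])
  finally show "cinner (Aop x) y = cinner x (Aop y)" by (simp add: Aop_inner)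
qed

lemma Aop_inj: "Aop y = 0 \<Longrightarrow> y = 0"
proof -
  assume "Aop y = 0"
  hence "cinner (res 1 y) (res 1 y) = 0" using Aop_inner[of y y] by simp
  hence "res 1 y = 0" by simp
  thus "y = 0" using res_prop(2)[of 1 y] by (simp add: T_zero)
qed

lemma Aop_le_res: "norm (Aop y) \<le> norm (res 1 y)"
proof -
  have R: "norm (res 1 u) \<le> norm u" for u
    using norm_le2[OF res_prop(1)[of 1 u], of 1] res_prop(2)[of 1 u] by simp
  have "(norm (Aop y))^2 = Re (cinner (Aop y) (Aop y))" by (simp add: Re_cinner_self)
  also have "\<dots> = Re (cinner (res 1 y) (res 1 (Aop y)))" by (simp add: Aop_inner)
  also have "\<dots> \<le> cmod (cinner (res 1 y) (res 1 (Aop y)))" by (rule complex_Re_le_cmod)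
  also have "\<dots> \<le> norm (res 1 y) * norm (res 1 (Aop y))" by (rule cauchy_schwarz)
  also have "\<dots> \<le> norm (res 1 y) * norm (Aop y)" by (intro mult_left_mono R) simp
  finally have "(norm (Aop y))^2 \<le> norm (res 1 y) * norm (Aop y)" .
  thus ?thesis by (cases "norm (Aop y) = 0") (auto simp: power2_eq_square)
qed

lemma T_bound_res: "x \<in> D \<Longrightarrow> norm (T x) \<le> norm (T x + scaleC (cc 1) x) \<and> res 1 (T x + scaleC (cc 1) x) = x"
  using norm_le1[of x 1] res_left[of 1 x] by simp

end



lemma cinner_orth_sym: "cinner x y = 0 \<Longrightarrow> cinner y (x::'a::chilbert) = 0"
  using cinner_cnj_commute[of y x] by simp

locale decomp =
  fixes H1 H2 :: "'a::chilbert set"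
  assumes c1: "closed_csubspace H1" and c2: "closed_csubspace H2"
    and orth: "\<And>x y. x \<in> H1 \<Longrightarrow> y \<in> H2 \<Longrightarrow> cinner x y = 0"
    and span: "\<And>x. \<exists>u v. u \<in> H1 \<and> v \<in> H2 \<and> x = u + v"
begin

lemma cs1: "csubspace H1" using c1 unfolding closed_csubspace_def by simp
lemma cs2: "csubspace H2" using c2 unfolding closed_csubspace_def by simp

lemma orth': "x \<in> H2 \<Longrightarrow> y \<in> H1 \<Longrightarrow> cinner x y = 0"
  using orth cinner_orth_sym by blast

definition p1 :: "'a \<Rightarrow> 'a" where "p1 x = (SOME u. u \<in> H1 \<and> x - u \<in> H2)"
definition p2 :: "'a \<Rightarrow> 'a" where "p2 x = x - p1 x"

lemma p1_prop: "p1 x \<in> H1 \<and> x - p1 x \<in> H2"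
proof -
  obtain u v where "u \<in> H1" "v \<in> H2" "x = u + v" using span by blast
  hence "u \<in> H1 \<and> x - u \<in> H2" by simp
  thus ?thesis unfolding p1_def by (rule someI)
qed

lemma p1_in: "p1 x \<in> H1" using p1_prop by blast
lemma p2_in: "p2 x \<in> H2" using p1_prop unfolding p2_def by blast
lemma p12: "p1 x + p2 x = x" unfolding p2_def by simp

lemma p1_unique: assumes "u \<in> H1" "x - u \<in> H2" shows "p1 x = u"
proof -
  let ?w = "p1 x - u"
  have w1: "?w \<in> H1" by (intro csubspace_diff cs1 p1_in assms(1))
  have "?w = (x - u) - (x - p1 x)" by simp
  hence w2: "?w \<in> H2" using csubspace_diff[OF cs2 assms(2)] p1_prop by metis
  have "cinner ?w ?w = 0" by (rule orth[OF w1 w2])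
  thus ?thesis by simp
qed

lemma p1_H1: "x \<in> H1 \<Longrightarrow> p1 x = x" by (rule p1_unique) (simp_all add: csubspace_0[OF cs2])
lemma p1_H2: "x \<in> H2 \<Longrightarrow> p1 x = 0" by (rule p1_unique) (simp_all add: csubspace_0[OF cs1])
lemma p2_H1: "x \<in> H1 \<Longrightarrow> p2 x = 0" by (simp add: p2_def p1_H1)
lemma p2_H2: "x \<in> H2 \<Longrightarrow> p2 x = x" by (simp add: p2_def p1_H2)

lemma p_norm: "(norm x)^2 = (norm (p1 x))^2 + (norm (p2 x))^2"
  using pythagoras[OF orth[OF p1_in p2_in], of x x] by (simp add: p12)

lemma p1_norm: "norm (p1 x) \<le> norm x"
  using p_norm[of x] by (simp add: power2_le_imp_le)

lemma bop_p1: "bop p1"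
proof (rule bopI[where K=1])
  fix x y
  show "p1 (x + y) = p1 x + p1 y"
  proof (rule p1_unique)
    show "p1 x + p1 y \<in> H1" by (intro csubspace_add cs1 p1_in)
    have "x + y - (p1 x + p1 y) = (x - p1 x) + (y - p1 y)" by simp
    thus "x + y - (p1 x + p1 y) \<in> H2" using csubspace_add[OF cs2] p1_prop by metis
  qed
  fix c
  show "p1 (scaleC c x) = scaleC c (p1 x)"
  proof (rule p1_unique)
    show "scaleC c (p1 x) \<in> H1" by (intro csubspace_scaleC cs1 p1_in)
    have "scaleC c x - scaleC c (p1 x) = scaleC c (x - p1 x)" by (simp add: scaleC_diff_right)
    thus "scaleC c x - scaleC c (p1 x) \<in> H2" using csubspace_scaleC[OF cs2] p1_prop by metis
  qed
  show "norm (p1 x) \<le> norm x * 1" using p1_norm by simp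
qed

lemma bop_p2: "bop p2"
proof -
  have "bop (\<lambda>x. id x - p1 x)" by (rule bop_minus_op[OF bop_id bop_p1])
  thus ?thesis unfolding p2_def[abs_def] by simp
qed

lemma sadj_p1: "sadj p1"
  unfolding sadj_def
proof (intro allI)
  fix x y
  have "cinner (p1 x) y = cinner (p1 x) (p1 y + p2 y)" by (simp add: p12)
  also have "\<dots> = cinner (p1 x) (p1 y)" by (simp add: cinner_add_right orth[OF p1_in p2_in])
  also have "\<dots> = cinner (p1 x + p2 x) (p1 y)" by (simp add: cinner_add_left orth'[OF p2_in p1_in])
  finally show "cinner (p1 x) y = cinner x (p1 y)" by (simp add: p12)
qed

lemma sadj_p2: "sadj p2"
  using sadj_p1 unfolding sadj_def p2_def by (simp add: cinner_diff_left cinner_diff_right)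

lemma p1_comm:
  assumes B: "bop B" and B1: "\<And>x. x \<in> H1 \<Longrightarrow> B x \<in> H1" and B2: "\<And>x. x \<in> H2 \<Longrightarrow> B x \<in> H2"
  shows "B (p1 x) = p1 (B x)"
proof -
  have "p1 (B x) = B (p1 x)"
  proof (rule p1_unique)
    show "B (p1 x) \<in> H1" by (rule B1[OF p1_in])
    have "B x - B (p1 x) = B (p2 x)" by (simp add: p2_def bop_diff[OF B])
    thus "B x - B (p1 x) \<in> H2" using B2[OF p2_in] by simp
  qed
  thus ?thesis by simp
qed

lemma p2_comm:
  assumes B: "bop B" and B1: "\<And>x. x \<in> H1 \<Longrightarrow> B x \<in> H1" and B2: "\<And>x. x \<in> H2 \<Longrightarrow> B x \<in> H2"
  shows "B (p2 x) = p2 (B x)"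
  using p1_comm[OF assms, of x] by (simp add: p2_def bop_diff[OF B])

end


lemma solve2:
  fixes p m u :: "'a::chilbert" and a b :: real
  assumes h1: "p + m = scaleC (of_real a) u" and h2: "scaleC \<i> (p - m) = scaleC (of_real b) u"
  shows "p = scaleC ((of_real a - \<i> * of_real b) / 2) u \<and> m = scaleC ((of_real a + \<i> * of_real b) / 2) u"
proof -
  have "p - m = scaleC (- \<i>) (scaleC \<i> (p - m))" by (simp add: scaleC_scaleC scaleC_one)
  also have "\<dots> = scaleC (- \<i> * of_real b) u" by (simp add: h2 scaleC_scaleC)
  finally have h3: "p - m = scaleC (- \<i> * of_real b) u" .
  have "scaleC 2 p = (p + m) + (p - m)" by (simp add: scaleC_add_left[of 1 1, simplified] scaleC_one)
  also have "\<dots> = scaleC (of_real a - \<i> * of_real b) u" by (simp add: h1 h3 scaleC_add_left[symmetric])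
  finally have "scaleC 2 p = scaleC (of_real a - \<i> * of_real b) u" .
  hence "scaleC (1/2) (scaleC 2 p) = scaleC (1/2) (scaleC (of_real a - \<i> * of_real b) u)" by simp
  hence hp: "p = scaleC ((of_real a - \<i> * of_real b) / 2) u" by (simp add: scaleC_scaleC scaleC_one)
  have "m = (p + m) - p" by simp
  also have "\<dots> = scaleC (of_real a) u - scaleC ((of_real a - \<i> * of_real b) / 2) u"
    by (simp only: h1 hp[symmetric])
  also have "\<dots> = scaleC (of_real a - (of_real a - \<i> * of_real b) / 2) u"
    by (simp only: scaleC_diff_left)
  also have "of_real a - (of_real a - \<i> * of_real b) / 2 = (of_real a + \<i> * of_real b) / (2::complex)"
    by (simp add: field_simps)
  finally show ?thesis using hp by simp
qed

locale blk = decomp H1 H2 for H1 H2 :: "'a::chilbert set" +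
  fixes G :: "('g, 'c) monoid_scheme" and V :: "'g \<Rightarrow> 'a \<Rightarrow> 'a" and W :: "'a \<Rightarrow> 'a"
  assumes Vb: "\<And>g. g \<in> carrier G \<Longrightarrow> bop (V g)"
    and irr1: "irreducible_subrep G V H1" and irr2: "irreducible_subrep G V H2"
    and Wbij: "bij_betw W H1 H2" and Wlin: "clinear_on H1 W"
    and Wiso: "\<And>x y. x \<in> H1 \<Longrightarrow> y \<in> H1 \<Longrightarrow> cinner (W x) (W y) = cinner x y"
    and Wcomm: "\<And>g x. g \<in> carrier G \<Longrightarrow> x \<in> H1 \<Longrightarrow> W (V g x) = V g (W x)"
begin

lemma inv1: "g \<in> carrier G \<Longrightarrow> x \<in> H1 \<Longrightarrow> V g x \<in> H1"
  using irr1 unfolding irreducible_subrep_def rep_invariant_def by blast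
lemma inv2: "g \<in> carrier G \<Longrightarrow> x \<in> H2 \<Longrightarrow> V g x \<in> H2"
  using irr2 unfolding irreducible_subrep_def rep_invariant_def by blast
lemma Vp1: "g \<in> carrier G \<Longrightarrow> V g (p1 x) = p1 (V g x)"
  by (rule p1_comm[OF Vb]) (auto intro: inv1 inv2)
lemma Vp2: "g \<in> carrier G \<Longrightarrow> V g (p2 x) = p2 (V g x)"
  by (rule p2_comm[OF Vb]) (auto intro: inv1 inv2)

definition Wi' :: "'a \<Rightarrow> 'a" where "Wi' = inv_into H1 W"

lemma W_in: "u \<in> H1 \<Longrightarrow> W u \<in> H2" using Wbij bij_betwE by blast
lemma Wi'_in: "v \<in> H2 \<Longrightarrow> Wi' v \<in> H1"
  unfolding Wi'_def using bij_betw_inv_into[OF Wbij] bij_betwE by blast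
lemma W_Wi': "v \<in> H2 \<Longrightarrow> W (Wi' v) = v"
  unfolding Wi'_def by (rule bij_betw_inv_into_right[OF Wbij])
lemma Wi'_W: "u \<in> H1 \<Longrightarrow> Wi' (W u) = u"
  unfolding Wi'_def by (rule bij_betw_inv_into_left[OF Wbij])
lemma W_add: "u \<in> H1 \<Longrightarrow> v \<in> H1 \<Longrightarrow> W (u + v) = W u + W v"
  using Wlin unfolding clinear_on_def by blast
lemma W_scaleC: "u \<in> H1 \<Longrightarrow> W (scaleC c u) = scaleC c (W u)"
  using Wlin unfolding clinear_on_def by blast
lemma W_norm: "u \<in> H1 \<Longrightarrow> norm (W u) = norm u"
  using Wiso[of u u] by (simp add: norm_eq_sqrt_cinner)

lemma Wi'_add: "v \<in> H2 \<Longrightarrow> w \<in> H2 \<Longrightarrow> Wi' (v + w) = Wi' v + Wi' w"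
proof -
  assume v: "v \<in> H2" and w: "w \<in> H2"
  have "v + w = W (Wi' v + Wi' w)" using W_add[OF Wi'_in[OF v] Wi'_in[OF w]] W_Wi' v w by simp
  thus ?thesis using Wi'_W[OF csubspace_add[OF cs1 Wi'_in[OF v] Wi'_in[OF w]]] by simp
qed
lemma Wi'_scaleC: "v \<in> H2 \<Longrightarrow> Wi' (scaleC c v) = scaleC c (Wi' v)"
proof -
  assume v: "v \<in> H2"
  have "scaleC c v = W (scaleC c (Wi' v))" using W_scaleC[OF Wi'_in[OF v]] W_Wi' v by simp
  thus ?thesis using Wi'_W[OF csubspace_scaleC[OF cs1 Wi'_in[OF v]]] by simp
qed
lemma Wi'_norm: "v \<in> H2 \<Longrightarrow> norm (Wi' v) = norm v"
  using W_norm[OF Wi'_in] W_Wi' by metis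

definition Wt :: "'a \<Rightarrow> 'a" where "Wt x = W (p1 x)"
definition Wi :: "'a \<Rightarrow> 'a" where "Wi x = Wi' (p2 x)"

lemma Wt_in: "Wt x \<in> H2" unfolding Wt_def by (rule W_in[OF p1_in])
lemma Wi_in: "Wi x \<in> H1" unfolding Wi_def by (rule Wi'_in[OF p2_in])
lemma Wt_H1: "u \<in> H1 \<Longrightarrow> Wt u = W u" unfolding Wt_def by (simp add: p1_H1)
lemma Wi_H2: "v \<in> H2 \<Longrightarrow> Wi v = Wi' v" unfolding Wi_def by (simp add: p2_H2)

lemma bop_Wt: "bop Wt"
proof (rule bopI[where K=1])
  fix x y c
  show "Wt (x + y) = Wt x + Wt y" unfolding Wt_def by (simp add: bop_add[OF bop_p1] W_add p1_in)
  show "Wt (scaleC c x) = scaleC c (Wt x)" unfolding Wt_def by (simp add: bop_scaleC[OF bop_p1] W_scaleC p1_in)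
  show "norm (Wt x) \<le> norm x * 1" unfolding Wt_def using W_norm[OF p1_in] p1_norm by simp
qed

lemma bop_Wi: "bop Wi"
proof (rule bopI[where K=1])
  fix x y c
  show "Wi (x + y) = Wi x + Wi y" unfolding Wi_def by (simp add: bop_add[OF bop_p2] Wi'_add p2_in)
  show "Wi (scaleC c x) = scaleC c (Wi x)" unfolding Wi_def by (simp add: bop_scaleC[OF bop_p2] Wi'_scaleC p2_in)
  have "norm (p2 x) \<le> norm x" using p_norm[of x] by (simp add: power2_le_imp_le)
  thus "norm (Wi x) \<le> norm x * 1" unfolding Wi_def using Wi'_norm[OF p2_in] by simp
qed

lemma Wt_comm: "g \<in> carrier G \<Longrightarrow> Wt (V g x) = V g (Wt x)"
  unfolding Wt_def by (simp add: Vp1[symmetric] Wcomm p1_in)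

lemma Wi_comm: "g \<in> carrier G \<Longrightarrow> Wi (V g x) = V g (Wi x)"
proof -
  assume g: "g \<in> carrier G"
  let ?v = "p2 x"
  have u: "V g (Wi' ?v) \<in> H1" by (rule inv1[OF g Wi'_in[OF p2_in]])
  have "W (V g (Wi' ?v)) = V g ?v" using Wcomm[OF g Wi'_in[OF p2_in]] W_Wi'[OF p2_in] by simp
  hence "Wi' (V g ?v) = V g (Wi' ?v)" using Wi'_W[OF u] by metis
  thus ?thesis unfolding Wi_def using Vp2[OF g] by simp
qed

lemma Wt_adj: "cinner (Wt x) y = cinner x (Wi y)"
proof -
  have "cinner (Wt x) y = cinner (Wt x) (p1 y + p2 y)" by (simp add: p12)
  also have "\<dots> = cinner (Wt x) (p2 y)" by (simp add: cinner_add_right orth'[OF Wt_in p1_in])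
  also have "\<dots> = cinner (W (p1 x)) (W (Wi y))" unfolding Wt_def Wi_def by (simp add: W_Wi' p2_in)
  also have "\<dots> = cinner (p1 x) (Wi y)" by (rule Wiso[OF p1_in Wi_in])
  also have "\<dots> = cinner (p1 x + p2 x) (Wi y)" by (simp add: cinner_add_left orth'[OF p2_in Wi_in])
  finally show ?thesis by (simp add: p12)
qed

lemma Wi_adj: "cinner (Wi x) y = cinner x (Wt y)"
  using Wt_adj[of y x] cinner_cnj_commute[of "Wi x" y] cinner_cnj_commute[of x "Wt y"] by simp

end


lemma bop_c3: "bop P \<Longrightarrow> bop A \<Longrightarrow> bop Q \<Longrightarrow> bop (\<lambda>x. P (A (Q x)))"
  using bop_comp[of P "A \<circ> Q"] bop_comp[of A Q] by (simp add: o_def)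

context blk begin

lemma sadj_sand: "sadj P \<Longrightarrow> sadj A \<Longrightarrow> sadj (\<lambda>x. P (A (P x)))"
  unfolding sadj_def by simp

lemma block:
  assumes A: "bop A" and saA: "sadj A" and comm: "\<And>g x. g \<in> carrier G \<Longrightarrow> A (V g x) = V g (A x)"
  shows "\<exists>s q. \<forall>x. A (A x) = scaleC s (A x) - scaleC q x"
proof -
  obtain a where a: "\<And>u. u \<in> H1 \<Longrightarrow> p1 (A u) = scaleC (of_real a) u"
  proof -
    have "\<exists>c. \<forall>x\<in>H1. p1 (A (p1 x)) = c *\<^sub>R x"
    proof (rule schur[OF irr1 bop_c3[OF bop_p1 A bop_p1] sadj_sand[OF sadj_p1 saA]])
      show "(\<lambda>x. p1 (A (p1 x))) ` H1 \<subseteq> H1" using p1_in by auto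
      show "\<And>g x. g \<in> carrier G \<Longrightarrow> p1 (A (p1 (V g x))) = V g (p1 (A (p1 x)))"
        by (simp add: Vp1[symmetric] comm)
      show "\<And>g. g \<in> carrier G \<Longrightarrow> bop (V g)" by (rule Vb)
    qed
    then obtain c where "\<forall>x\<in>H1. p1 (A (p1 x)) = c *\<^sub>R x" by blast
    thus ?thesis using that[of c] by (simp add: p1_H1 scaleR_scaleC)
  qed
  obtain d where d: "\<And>v. v \<in> H2 \<Longrightarrow> p2 (A v) = scaleC (of_real d) v"
  proof -
    have "\<exists>c. \<forall>x\<in>H2. p2 (A (p2 x)) = c *\<^sub>R x"
    proof (rule schur[OF irr2 bop_c3[OF bop_p2 A bop_p2] sadj_sand[OF sadj_p2 saA]])
      show "(\<lambda>x. p2 (A (p2 x))) ` H2 \<subseteq> H2" using p2_in by auto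
      show "\<And>g x. g \<in> carrier G \<Longrightarrow> p2 (A (p2 (V g x))) = V g (p2 (A (p2 x)))"
        by (simp add: Vp2[symmetric] comm)
      show "\<And>g. g \<in> carrier G \<Longrightarrow> bop (V g)" by (rule Vb)
    qed
    then obtain c where "\<forall>x\<in>H2. p2 (A (p2 x)) = c *\<^sub>R x" by blast
    thus ?thesis using that[of c] by (simp add: p2_H2 scaleR_scaleC)
  qed
  define X where "X x = Wi (A (p1 x))" for x
  define Xs where "Xs x = p1 (A (Wt x))" for x
  have bX: "bop X" unfolding X_def[abs_def] by (rule bop_c3[OF bop_Wi A bop_p1])
  have bXs: "bop Xs" unfolding Xs_def[abs_def] by (rule bop_c3[OF bop_p1 A bop_Wt])
  have Xadj: "cinner (X x) y = cinner x (Xs y)" for x y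
  proof -
    have "cinner (X x) y = cinner (A (p1 x)) (Wt y)" unfolding X_def by (rule Wi_adj)
    also have "\<dots> = cinner (p1 x) (A (Wt y))" using saA unfolding sadj_def by simp
    also have "\<dots> = cinner x (Xs y)" unfolding Xs_def using sadj_p1 unfolding sadj_def by simp
    finally show ?thesis .
  qed
  have Xsadj: "cinner (Xs x) y = cinner x (X y)" for x y
    using Xadj[of y x] cinner_cnj_commute[of "Xs x" y] cinner_cnj_commute[of x "X y"] by simp
  have XH1: "X x \<in> H1" for x unfolding X_def by (rule Wi_in)
  have XsH1: "Xs x \<in> H1" for x unfolding Xs_def by (rule p1_in)
  have Xcomm: "X (V g x) = V g (X x)" if g: "g \<in> carrier G" for g x
    unfolding X_def by (simp add: Vp1[OF g, symmetric] comm[OF g] Wi_comm[OF g])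
  have Xscomm: "Xs (V g x) = V g (Xs x)" if g: "g \<in> carrier G" for g x
    unfolding Xs_def by (simp add: Wt_comm[OF g] comm[OF g] Vp1[OF g])
  obtain c1 where c1: "\<And>u. u \<in> H1 \<Longrightarrow> X u + Xs u = scaleC (of_real c1) u"
  proof -
    have "\<exists>c. \<forall>x\<in>H1. X x + Xs x = c *\<^sub>R x"
    proof (rule schur[OF irr1 bop_plus[OF bX bXs]])
      show "sadj (\<lambda>x. X x + Xs x)" unfolding sadj_def
        by (simp add: cinner_add_left cinner_add_right Xadj Xsadj add.commute)
      show "(\<lambda>x. X x + Xs x) ` H1 \<subseteq> H1" using csubspace_add[OF cs1 XH1 XsH1] by auto
      show "\<And>g x. g \<in> carrier G \<Longrightarrow> X (V g x) + Xs (V g x) = V g (X x + Xs x)"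
        by (simp add: Xcomm Xscomm bop_add[OF Vb])
      show "\<And>g. g \<in> carrier G \<Longrightarrow> bop (V g)" by (rule Vb)
    qed
    then obtain c where "\<forall>x\<in>H1. X x + Xs x = c *\<^sub>R x" by blast
    thus ?thesis using that[of c] by (simp add: scaleR_scaleC)
  qed
  obtain c2 where c2: "\<And>u. u \<in> H1 \<Longrightarrow> scaleC \<i> (X u - Xs u) = scaleC (of_real c2) u"
  proof -
    have "\<exists>c. \<forall>x\<in>H1. scaleC \<i> (X x - Xs x) = c *\<^sub>R x"
    proof (rule schur[OF irr1 bop_scaleC_op[OF bop_minus_op[OF bX bXs]]])
      show "sadj (\<lambda>x. scaleC \<i> (X x - Xs x))" unfolding sadj_def
        by (simp add: cinner_diff_left cinner_diff_right cinner_scaleC_left cinner_scaleC_right Xadj Xsadj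
            algebra_simps)
      show "(\<lambda>x. scaleC \<i> (X x - Xs x)) ` H1 \<subseteq> H1"
        using csubspace_scaleC[OF cs1 csubspace_diff[OF cs1 XH1 XsH1]] by auto
      show "\<And>g x. g \<in> carrier G \<Longrightarrow> scaleC \<i> (X (V g x) - Xs (V g x)) = V g (scaleC \<i> (X x - Xs x))"
        by (simp add: Xcomm Xscomm bop_diff[OF Vb] bop_scaleC[OF Vb])
      show "\<And>g. g \<in> carrier G \<Longrightarrow> bop (V g)" by (rule Vb)
    qed
    then obtain c where "\<forall>x\<in>H1. scaleC \<i> (X x - Xs x) = c *\<^sub>R x" by blast
    thus ?thesis using that[of c] by (simp add: scaleR_scaleC)
  qed
  define \<beta> where "\<beta> = (of_real c1 - \<i> * of_real c2) / (2::complex)"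
  have cb: "cnj \<beta> = (of_real c1 + \<i> * of_real c2) / 2" by (simp add: \<beta>_def)
  have Xb: "X u = scaleC \<beta> u" and Xsb: "Xs u = scaleC (cnj \<beta>) u" if u: "u \<in> H1" for u
    using solve2[OF c1[OF u] c2[OF u]] by (simp_all add: \<beta>_def cb)
  have F1: "A u = scaleC (of_real a) u + scaleC \<beta> (W u)" if u: "u \<in> H1" for u
  proof -
    have "p2 (A u) = W (Wi (A u))" unfolding Wi_def by (simp add: W_Wi' p2_in)
    also have "\<dots> = W (X u)" unfolding X_def by (simp add: p1_H1 u)
    also have "\<dots> = scaleC \<beta> (W u)" by (simp add: Xb u W_scaleC)
    finally have "p2 (A u) = scaleC \<beta> (W u)" .
    thus ?thesis using p12[of "A u"] a[OF u] by simp
  qed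
  have F2: "A (W u) = scaleC (cnj \<beta>) u + scaleC (of_real d) (W u)" if u: "u \<in> H1" for u
  proof -
    have "p1 (A (W u)) = Xs u" unfolding Xs_def by (simp add: Wt_H1 u)
    moreover have "p2 (A (W u)) = scaleC (of_real d) (W u)" by (rule d[OF W_in[OF u]])
    ultimately show ?thesis using p12[of "A (W u)"] Xsb[OF u] by simp
  qed
  define comb where "comb u \<alpha> \<gamma> = scaleC \<alpha> u + scaleC \<gamma> (W u)" for u \<alpha> \<gamma>
  have Acomb: "A (comb u \<alpha> \<gamma>) = comb u (\<alpha> * of_real a + \<gamma> * cnj \<beta>) (\<alpha> * \<beta> + \<gamma> * of_real d)"
    if u: "u \<in> H1" for u \<alpha> \<gamma>
    unfolding comb_def
    by (simp add: bop_add[OF A] bop_scaleC[OF A] F1[OF u] F2[OF u] scaleC_add_right scaleC_scaleC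
        scaleC_add_left add_ac mult_ac)
  define s :: complex where "s = of_real a + of_real d"
  define q where "q = of_real a * of_real d - \<beta> * cnj \<beta>"
  have combd: "scaleC s (comb u \<alpha> \<gamma>) - scaleC q (comb u \<alpha>' \<gamma>') = comb u (s * \<alpha> - q * \<alpha>') (s * \<gamma> - q * \<gamma>')"
    for u \<alpha> \<gamma> \<alpha>' \<gamma>'
    unfolding comb_def by (simp add: scaleC_add_right scaleC_scaleC scaleC_diff_left algebra_simps)
  have Q1: "A (A u) = scaleC s (A u) - scaleC q u" if u: "u \<in> H1" for u
  proof -
    have e1: "u = comb u 1 0" by (simp add: comb_def scaleC_one)
    have e2: "A u = comb u (of_real a) \<beta>" using F1[OF u] by (simp add: comb_def)
    have "A (A u) = comb u (of_real a * of_real a + \<beta> * cnj \<beta>) (of_real a * \<beta> + \<beta> * of_real d)"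
      unfolding e2 Acomb[OF u] ..
    also have "\<dots> = comb u (s * of_real a - q * 1) (s * \<beta> - q * 0)"
      by (simp add: s_def q_def algebra_simps)
    also have "\<dots> = scaleC s (comb u (of_real a) \<beta>) - scaleC q (comb u 1 0)" by (rule combd[symmetric])
    finally show ?thesis using e1 e2 by simp
  qed
  have Q2: "A (A (W u)) = scaleC s (A (W u)) - scaleC q (W u)" if u: "u \<in> H1" for u
  proof -
    have e1: "W u = comb u 0 1" by (simp add: comb_def scaleC_one)
    have e2: "A (W u) = comb u (cnj \<beta>) (of_real d)" using F2[OF u] by (simp add: comb_def)
    have "A (A (W u)) = comb u (cnj \<beta> * of_real a + of_real d * cnj \<beta>) (cnj \<beta> * \<beta> + of_real d * of_real d)"
      unfolding e2 Acomb[OF u] ..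
    also have "\<dots> = comb u (s * cnj \<beta> - q * 0) (s * of_real d - q * 1)"
      by (simp add: s_def q_def algebra_simps)
    also have "\<dots> = scaleC s (comb u (cnj \<beta>) (of_real d)) - scaleC q (comb u 0 1)" by (rule combd[symmetric])
    finally show ?thesis using e1 e2 by simp
  qed
  have "A (A x) = scaleC s (A x) - scaleC q x" for x
  proof -
    let ?u = "p1 x" and ?v = "Wi' (p2 x)"
    have v: "?v \<in> H1" by (rule Wi'_in[OF p2_in])
    have xe: "x = ?u + W ?v" using p12[of x] W_Wi'[OF p2_in] by simp
    have "A (A x) = A (A (?u + W ?v))" using arg_cong[OF xe, of "\<lambda>z. A (A z)"] .
    also have "\<dots> = A (A ?u) + A (A (W ?v))" by (simp add: bop_add[OF A])
    also have "\<dots> = (scaleC s (A ?u) - scaleC q ?u) + (scaleC s (A (W ?v)) - scaleC q (W ?v))"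
      by (simp add: Q1[OF p1_in] Q2[OF v])
    also have "\<dots> = scaleC s (A (?u + W ?v)) - scaleC q (?u + W ?v)"
      by (simp add: bop_add[OF A] scaleC_add_right)
    finally show ?thesis by (simp only: xe[symmetric])
  qed
  thus ?thesis by blast
qed

end



lemma quad_bound:
  fixes A :: "'a::chilbert \<Rightarrow> 'a"
  assumes A: "bop A" and inj: "\<And>y. A y = 0 \<Longrightarrow> y = 0" and nz: "x0 \<noteq> (0::'a)"
    and Q: "\<And>x. A (A x) = scaleC s (A x) - scaleC q x"
  shows "\<exists>K\<ge>0. \<forall>x. norm x \<le> K * norm (A x)"
proof -
  obtain M where M: "M > 0" "\<And>y. norm (A y) \<le> norm y * M" using bop_bound[OF A] by blast
  have "\<exists>K. \<forall>x. norm x \<le> K * norm (A x)"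
  proof (cases "q = 0")
    case False
    have "norm x \<le> ((cmod s + M) / cmod q) * norm (A x)" for x
    proof -
      have "scaleC q x = scaleC s (A x) - A (A x)" using Q[of x] by (simp add: algebra_simps)
      hence "cmod q * norm x = norm (scaleC s (A x) - A (A x))" by (simp add: norm_scaleC[symmetric])
      also have "\<dots> \<le> norm (scaleC s (A x)) + norm (A (A x))" by (rule norm_triangle_ineq4)
      also have "\<dots> \<le> cmod s * norm (A x) + norm (A x) * M" using M(2)[of "A x"] by (simp add: norm_scaleC)
      finally have "cmod q * norm x \<le> (cmod s + M) * norm (A x)" by (simp add: algebra_simps)
      thus ?thesis using False by (simp add: field_simps mult.commute)
    qed
    thus ?thesis by blast
  next
    case True
    have Ax: "A x = scaleC s x" for x
    proof -
      have "A (A x - scaleC s x) = 0" using Q[of x] True by (simp add: bop_diff[OF A] bop_scaleC[OF A])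
      hence "A x - scaleC s x = 0" by (rule inj)
      thus ?thesis by simp
    qed
    have s0: "s \<noteq> 0"
    proof
      assume "s = 0"
      hence "A x0 = 0" using Ax by simp
      thus False using inj nz by blast
    qed
    have "norm x \<le> (1 / cmod s) * norm (A x)" for x using s0 by (simp add: Ax norm_scaleC)
    thus ?thesis by blast
  qed
  then obtain K where K: "\<And>x. norm x \<le> K * norm (A x)" by blast
  have "0 < norm x0" using nz by simp
  also have "\<dots> \<le> K * norm (A x0)" by (rule K)
  finally have "K > 0" by (simp add: zero_less_mult_iff)
  thus ?thesis using K by (intro exI[of _ K]) auto
qed

theorem proposition5p9:
  fixes G :: "('g, 'c) monoid_scheme"
    and V :: "'g \<Rightarrow> 'h::chilbert \<Rightarrow> 'h"
    and H1 H2 D :: "'h set"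
    and T :: "'h \<Rightarrow> 'h"
  assumes "group G"
    and "separable_space (euclidean :: 'h topology)"
    and "unitary_rep G V"
    and "orth_decomposition G V H1 H2"
    and "irreducible_subrep G V H1"
    and "irreducible_subrep G V H2"
    and "equivalent_subreps G V H1 H2"
    and "densely_defined D T"
    and "self_adjoint D T"
    and "G_invariant G V D T"
  shows "bounded_op D T"
proof -
  note ur = assms(3) and od = assms(4) and irr1 = assms(5) and irr2 = assms(6) and eqv = assms(7)
    and dd = assms(8) and sa = assms(9) and ginv = assms(10)
  have Vb: "bop (V g)" if g: "g \<in> carrier G" for g
  proof -
    have u: "unitary_op (V g)" using ur g unfolding unitary_rep_def by blast
    show ?thesis
    proof (rule bopI[where K=1])
      fix x y c
      show "V g (x + y) = V g x + V g y" using u unfolding unitary_op_def clinear_on_def by blast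
      show "V g (scaleC c x) = scaleC c (V g x)" using u unfolding unitary_op_def clinear_on_def by blast
      have "cinner (V g x) (V g x) = cinner x x" using u unfolding unitary_op_def by blast
      hence "norm (V g x) = norm x" by (simp add: norm_eq_sqrt_cinner)
      thus "norm (V g x) \<le> norm x * 1" by simp
    qed
  qed
  have dec: "decomp H1 H2"
  proof
    show "closed_csubspace H1" "closed_csubspace H2" using od unfolding orth_decomposition_def by auto
    show "\<And>x y. x \<in> H1 \<Longrightarrow> y \<in> H2 \<Longrightarrow> cinner x y = 0" using od unfolding orth_decomposition_def by blast
    fix x
    have "x \<in> {x + y |x y. x \<in> H1 \<and> y \<in> H2}" using od unfolding orth_decomposition_def by blast
    thus "\<exists>u v. u \<in> H1 \<and> v \<in> H2 \<and> x = u + v" by blast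
  qed
  obtain W where W: "bij_betw W H1 H2" "clinear_on H1 W"
    "\<forall>x\<in>H1. \<forall>y\<in>H1. cinner (W x) (W y) = cinner x y"
    "\<forall>g\<in>carrier G. \<forall>x\<in>H1. W (V g x) = V g (W x)"
    using eqv unfolding equivalent_subreps_def by blast
  interpret B: blk H1 H2 G V W
  proof (rule blk.intro[OF dec], unfold_locales)
    show "\<And>g. g \<in> carrier G \<Longrightarrow> bop (V g)" by (rule Vb)
    show "irreducible_subrep G V H1" by (rule irr1)
    show "irreducible_subrep G V H2" by (rule irr2)
    show "bij_betw W H1 H2" by (rule W(1))
    show "clinear_on H1 W" by (rule W(2))
    show "\<And>x y. x \<in> H1 \<Longrightarrow> y \<in> H1 \<Longrightarrow> cinner (W x) (W y) = cinner x y" using W(3) by blast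
    show "\<And>g x. g \<in> carrier G \<Longrightarrow> x \<in> H1 \<Longrightarrow> W (V g x) = V g (W x)" using W(4) by blast
  qed
  interpret S: sa_op D T by unfold_locales (rule dd, rule sa)
  have GD: "V g x \<in> D" if "g \<in> carrier G" "x \<in> D" for g x using ginv that unfolding G_invariant_def by blast
  have GT: "T (V g x) = V g (T x)" if "g \<in> carrier G" "x \<in> D" for g x using ginv that unfolding G_invariant_def by blast
  have Acomm: "S.Aop (V g x) = V g (S.Aop x)" if g: "g \<in> carrier G" for g x
  proof -
    have r1: "V g (S.res 1 x) = S.res 1 (V g x)"
      by (rule S.res_comm[OF _ Vb[OF g]]) (auto intro: GD[OF g] GT[OF g])
    have r2: "V g (S.res (-1) y) = S.res (-1) (V g y)" for y
      by (rule S.res_comm[OF _ Vb[OF g]]) (auto intro: GD[OF g] GT[OF g])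
    show ?thesis unfolding S.Aop_def by (simp add: r1[symmetric] r2)
  qed
  obtain s q where Q: "\<And>x. S.Aop (S.Aop x) = scaleC s (S.Aop x) - scaleC q x"
    using B.block[OF S.Aop_bop S.Aop_sadj Acomm] by blast
  have H10: "H1 \<noteq> {0}" using irr1 unfolding irreducible_subrep_def by blast
  have "0 \<in> H1" by (rule csubspace_0[OF B.cs1])
  then obtain x0 :: 'h where x0: "x0 \<noteq> 0" using H10 by blast
  obtain K where K: "K \<ge> 0" "\<And>x. norm x \<le> K * norm (S.Aop x)"
    using quad_bound[OF S.Aop_bop S.Aop_inj x0 Q] by blast
  have "norm (T x) \<le> K * norm x" if x: "x \<in> D" for x
  proof -
    let ?y = "T x + scaleC (S.cc 1) x"
    have ry: "S.res 1 ?y = x" using S.T_bound_res[OF x] by blast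
    have "norm (T x) \<le> norm ?y" using S.T_bound_res[OF x] by blast
    also have "norm ?y \<le> K * norm (S.Aop ?y)" by (rule K(2))
    also have "\<dots> \<le> K * norm (S.res 1 ?y)" by (intro mult_left_mono S.Aop_le_res K(1))
    finally show ?thesis by (simp only: ry)
  qed
  thus ?thesis unfolding bounded_op_def by blast
qed


end
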